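(* Let $\alpha>0$. $LR(\alpha)$ holds if and only if $LR_{\mathrm{fermi}}(\alpha)$ holds (for the Fibonacci XY chain with fixed coupling $\lambda>0$ and phase $\omega$).
   Context: Setting: $V_j=\lambda\chi_{[1-\phi^{-1},1)}(j\phi^{-1}+\omega\bmod 1)$ with $\phi=\frac{1+\sqrt5}2$; $\mathcal H_n=\bigotimes_{j=1}^n\mathbb C^2$; $H_n^{XY}=-\sum_{j=1}^{n-1}(\sigma^x_j\sigma^x_{j+1}+\sigma^y_j\sigma^y_{j+1})+\sum_{j=1}^nV_j\sigma^z_j$ with Pauli matrices acting on the indicated factor; $\mathcal A_J=\bigotimes_{j\in J}\mathcal B(\mathbb C^2)$ embedded in $\mathcal B(\mathcal H_n)$; $\tau_t^n(A)=e^{itH_n^{XY}}Ae^{-itH_n^{XY}}$. Let $a_j=\frac12(\sigma^x_j-i\sigma^y_j)$ and define the Jordan–Wigner fermions $c_1=a_1$, $c_j=\sigma^z_1\cdots\sigma^z_{j-1}a_j$ for $2\le j\le n$. $LR(\alpha)$: there exist $C_0,\mu>0,v\ge0$ such that for all $n$, $1\le j<j'\le n$, $t>0$, $A\in\mathcal A_{\{j\}}$, $B\in\mathcal A_{\{j',\dots,n\}}$: $\|[\tau_t^n(A),B]\|\le C_0\|A\|\|B\|e^{-\mu(|j'-j|-vt^\alpha)}$. $LR_{\mathrm{fermi}}(\alpha)$: there exist $C_1,\mu>0,v\ge0$ such that for all $n$, $1\le j<j'\le n$, $t>0$, $B\in\mathcal A_{\{j',\dots,n\}}$: $\|[\tau_t^n(c_j),B]\|+\|[\tau_t^n(c_j^*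 ),B]\|\le C_1\|B\|e^{-\mu(|j'-j|-vt^\alpha)}$. (Constants $C_0,C_1,\mu,v$ in each property may differ, and are independent of $n,j,j',t,A,B$.) *)

theory Defs
  imports Complex_Main
begin

text \<open>Operators on H_n = tensor product of n copies of C^2, represented concretely
 as matrices indexed by computational basis configurations. A basis configuration
 is a set x \<subseteq> {1..n}: site j is in basis state e_1 if j \<in> x and in e_0 otherwise.
 Only entries indexed by subsets of {1..n} are relevant.\<close>

type_synonym op = "nat set \<Rightarrow> nat set \<Rightarrow> complex"

definition mid :: "nat \<Rightarrow> op" where
  "mid n = (\<lambda>x y. if x = y then 1 else 0)"

definition mmult :: "nat \<Rightarrow> op \<Rightarrow> op \<Rightarrow> op" where
  "mmult n A B = (\<lambda>x y. \<Sum>z\<in>Pow {1..n}. A x z * B z y)"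

definition madd :: "op \<Rightarrow> op \<Rightarrow> op" where
  "madd A B = (\<lambda>x y. A x y + B x y)"

definition msub :: "op \<Rightarrow> op \<Rightarrow> op" where
  "msub A B = (\<lambda>x y. A x y - B x y)"

definition mscale :: "complex \<Rightarrow> op \<Rightarrow> op" where
  "mscale c A = (\<lambda>x y. c * A x y)"

definition madj :: "op \<Rightarrow> op" where
  "madj A = (\<lambda>x y. cnj (A y x))"

fun mpow :: "nat \<Rightarrow> op \<Rightarrow> nat \<Rightarrow> op" where
  "mpow n A 0 = mid n"
| "mpow n A (Suc k) = mmult n A (mpow n A k)"

definition mexp :: "nat \<Rightarrow> op \<Rightarrow> op" where
  "mexp n A = (\<lambda>x y. (\<Sum>k. mpow n A k x y / of_nat (fact k)))"

definition opnorm :: "nat \<Rightarrow> op \<Rightarrow> real" where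
  "opnorm n A = Sup {sqrt (\<Sum>x\<in>Pow {1..n}. (cmod (\<Sum>y\<in>Pow {1..n}. A x y * v y))\<^sup>2) | v.
                     (\<Sum>y\<in>Pow {1..n}. (cmod (v y))\<^sup>2) \<le> 1}"

definition comm :: "nat \<Rightarrow> op \<Rightarrow> op \<Rightarrow> op" where
  "comm n A B = msub (mmult n A B) (mmult n B A)"

text \<open>2x2 matrices indexed by bool (False = e_0, True = e_1).\<close>
definition pauli_x :: "bool \<Rightarrow> bool \<Rightarrow> complex" where
  "pauli_x a b = (if a \<noteq> b then 1 else 0)"

definition pauli_y :: "bool \<Rightarrow> bool \<Rightarrow> complex" where
  "pauli_y a b = (if a = b then 0 else if a then \<i> else - \<i>)"

definition pauli_z :: "bool \<Rightarrow> bool \<Rightarrow> complex" where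
  "pauli_z a b = (if a = b then (if a then -1 else 1) else 0)"

definition lower :: "bool \<Rightarrow> bool \<Rightarrow> complex" where
  "lower a b = (pauli_x a b - \<i> * pauli_y a b) / 2"

text \<open>The 2x2 matrix M acting on factor j (identity on the others).\<close>
definition site :: "nat \<Rightarrow> (bool \<Rightarrow> bool \<Rightarrow> complex) \<Rightarrow> op" where
  "site j M = (\<lambda>x y. if x - {j} = y - {j} then M (j \<in> x) (j \<in> y) else 0)"

text \<open>Local algebra A_J = (tensor over j in J of B(C^2)) tensor identity, inside B(H_n).\<close>
definition loc_alg :: "nat \<Rightarrow> nat set \<Rightarrow> op set" where
  "loc_alg n J = {M. \<exists>f. \<forall>x\<in>Pow {1..n}. \<forall>y\<in>Pow {1..n}.
       M x y = (if x - J = y - J then f (x \<inter> J) (y \<inter> J) else 0)}"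

definition golden :: real where
  "golden = (1 + sqrt 5) / 2"

definition pot :: "real \<Rightarrow> real \<Rightarrow> nat \<Rightarrow> real" where
  "pot lam \<omega> j = lam * (let s = frac (real j / golden + \<omega>) in
        if 1 - 1 / golden \<le> s \<and> s < 1 then 1 else 0)"

definition msum :: "nat set \<Rightarrow> (nat \<Rightarrow> op) \<Rightarrow> op" where
  "msum S F = (\<lambda>x y. \<Sum>j\<in>S. F j x y)"

definition HXY :: "real \<Rightarrow> real \<Rightarrow> nat \<Rightarrow> op" where
  "HXY lam \<omega> n = madd
     (mscale (-1) (msum {1..<n} (\<lambda>j. madd (mmult n (site j pauli_x) (site (j+1) pauli_x))
                                            (mmult n (site j pauli_y) (site (j+1) pauli_y)))))
     (msum {1..n} (\<lambda>j. mscale (complex_of_real (pot lam \<omega> j)) (site j pauli_z)))"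

definition tau :: "real \<Rightarrow> real \<Rightarrow> nat \<Rightarrow> real \<Rightarrow> op \<Rightarrow> op" where
  "tau lam \<omega> n t A = mmult n (mmult n (mexp n (mscale (\<i> * complex_of_real t) (HXY lam \<omega> n))) A)
                                (mexp n (mscale (- \<i> * complex_of_real t) (HXY lam \<omega> n)))"

definition jw :: "nat \<Rightarrow> nat \<Rightarrow> op" where
  "jw n j = foldr (\<lambda>k M. mmult n (site k pauli_z) M) [1..<j] (site j lower)"

definition LR :: "real \<Rightarrow> real \<Rightarrow> real \<Rightarrow> bool" where
  "LR lam \<omega> \<alpha> \<longleftrightarrow> (\<exists>C0 \<mu> v. C0 > 0 \<and> \<mu> > 0 \<and> v \<ge> 0 \<and>
     (\<forall>n j j' t A B. 1 \<le> j \<and> j < j' \<and> j' \<le> n \<and> t > 0 \<and>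
        A \<in> loc_alg n {j} \<and> B \<in> loc_alg n {j'..n} \<longrightarrow>
        opnorm n (comm n (tau lam \<omega> n t A) B)
          \<le> C0 * opnorm n A * opnorm n B * exp (- \<mu> * (real (j' - j) - v * t powr \<alpha>))))"

definition LR_fermi :: "real \<Rightarrow> real \<Rightarrow> real \<Rightarrow> bool" where
  "LR_fermi lam \<omega> \<alpha> \<longleftrightarrow> (\<exists>C1 \<mu> v. C1 > 0 \<and> \<mu> > 0 \<and> v \<ge> 0 \<and>
     (\<forall>n j j' t B. 1 \<le> j \<and> j < j' \<and> j' \<le> n \<and> t > 0 \<and> B \<in> loc_alg n {j'..n} \<longrightarrow>
        opnorm n (comm n (tau lam \<omega> n t (jw n j)) B)
          + opnorm n (comm n (tau lam \<omega> n t (madj (jw n j))) B)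
          \<le> C1 * opnorm n B * exp (- \<mu> * (real (j' - j) - v * t powr \<alpha>))))"

end

theory Submission
  imports Defs "HOL-Analysis.L2_Norm"
begin


abbreviation PP :: "nat \<Rightarrow> nat set set" where "PP n \<equiv> Pow {1..n}"

definition eqv :: "nat \<Rightarrow> op \<Rightarrow> op \<Rightarrow> bool" where
  "eqv n A B \<longleftrightarrow> (\<forall>x\<in>PP n. \<forall>y\<in>PP n. A x y = B x y)"

lemma eqv_refl[simp]: "eqv n A A" by (simp add: eqv_def)
lemma eqv_sym: "eqv n A B \<Longrightarrow> eqv n B A" by (simp add: eqv_def)
lemma eqv_trans: "eqv n A B \<Longrightarrow> eqv n B C \<Longrightarrow> eqv n A C" by (simp add: eqv_def)

lemma eqvD: "eqv n A B \<Longrightarrow> x \<in> PP n \<Longrightarrow> y \<in> PP n \<Longrightarrow> A x y = B x y" by (simp add: eqv_def)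

lemma mmult_cong: "eqv n A A' \<Longrightarrow> eqv n B B' \<Longrightarrow> eqv n (mmult n A B) (mmult n A' B')"
  unfolding eqv_def mmult_def by (auto intro!: sum.cong)

lemma madd_cong: "eqv n A A' \<Longrightarrow> eqv n B B' \<Longrightarrow> eqv n (madd A B) (madd A' B')"
  unfolding eqv_def madd_def by auto
lemma msub_cong: "eqv n A A' \<Longrightarrow> eqv n B B' \<Longrightarrow> eqv n (msub A B) (msub A' B')"
  unfolding eqv_def msub_def by auto
lemma mscale_cong: "eqv n A A' \<Longrightarrow> eqv n (mscale c A) (mscale c A')"
  unfolding eqv_def mscale_def by auto
lemma madj_cong: "eqv n A A' \<Longrightarrow> eqv n (madj A) (madj A')"
  unfolding eqv_def madj_def by auto
lemma comm_cong: "eqv n A A' \<Longrightarrow> eqv n B B' \<Longrightarrow> eqv n (comm n A B) (comm n A' B')"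
  unfolding comm_def by (intro msub_cong mmult_cong)

lemma mmult_assoc: "mmult n (mmult n A B) C = mmult n A (mmult n B C)"
  unfolding mmult_def
  by (auto simp: sum_distrib_left sum_distrib_right mult.assoc intro!: ext sum.swap[THEN trans])

lemma mmult_mid_left: "eqv n (mmult n (mid n) A) A"
proof -
  have "(\<Sum>z\<in>PP n. (if x = z then 1 else 0) * A z y) = A x y" if "x \<in> PP n" for x y
    using that by (simp add: if_distrib[of "\<lambda>u. u * A _ y"] sum.delta cong: if_cong)
  then show ?thesis unfolding eqv_def mmult_def mid_def by auto
qed

lemma mmult_mid_right: "eqv n (mmult n A (mid n)) A"
proof -
  have "(\<Sum>z\<in>PP n. A x z * (if z = y then 1 else 0)) = A x y" if "y \<in> PP n" for x y
    using that by (simp add: if_distrib[of "\<lambda>u. A x _ * u"] sum.delta' cong: if_cong)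
  then show ?thesis unfolding eqv_def mmult_def mid_def by auto
qed

lemma madj_mmult: "madj (mmult n A B) = mmult n (madj B) (madj A)"
  unfolding madj_def mmult_def by (auto simp: mult.commute intro!: ext)

lemma madj_madj[simp]: "madj (madj A) = A" unfolding madj_def by auto
lemma madj_mid[simp]: "madj (mid n) = mid n" unfolding madj_def mid_def by (auto intro!: ext)
lemma madj_madd: "madj (madd A B) = madd (madj A) (madj B)" unfolding madj_def madd_def by auto
lemma madj_mscale: "madj (mscale c A) = mscale (cnj c) (madj A)" unfolding madj_def mscale_def by auto
lemma madj_msum: "madj (msum S F) = msum S (\<lambda>j. madj (F j))" unfolding madj_def msum_def by auto

lemma mmult_madd_left: "mmult n (madd A B) C = madd (mmult n A C) (mmult n B C)"
  unfolding mmult_def madd_def by (auto simp: distrib_right sum.distrib intro!: ext)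
lemma mmult_madd_right: "mmult n C (madd A B) = madd (mmult n C A) (mmult n C B)"
  unfolding mmult_def madd_def by (auto simp: distrib_left sum.distrib intro!: ext)
lemma mmult_msub_left: "mmult n (msub A B) C = msub (mmult n A C) (mmult n B C)"
  unfolding mmult_def msub_def by (auto simp: left_diff_distrib sum_subtractf intro!: ext)
lemma mmult_msub_right: "mmult n C (msub A B) = msub (mmult n C A) (mmult n C B)"
  unfolding mmult_def msub_def by (auto simp: right_diff_distrib sum_subtractf intro!: ext)
lemma mmult_mscale_left: "mmult n (mscale c A) B = mscale c (mmult n A B)"
  unfolding mmult_def mscale_def by (auto simp: sum_distrib_left mult.assoc intro!: ext)
lemma mmult_mscale_right: "mmult n A (mscale c B) = mscale c (mmult n A B)"
  unfolding mmult_def mscale_def by (auto simp: sum_distrib_left mult.assoc mult.left_commute intro!: ext)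

lemma mpow_mscale: "mpow n (mscale c A) k = mscale (c ^ k) (mpow n A k)"
proof (induction k)
  case 0 then show ?case by (simp add: mscale_def)
next
  case (Suc k)
  then show ?case by (simp add: mmult_mscale_left mmult_mscale_right) (simp add: mscale_def mult_ac)
qed

lemma mpow_add: "eqv n (mmult n (mpow n A i) (mpow n A j)) (mpow n A (i + j))"
proof (induction i)
  case 0 then show ?case by (simp add: mmult_mid_left)
next
  case (Suc i)
  have "mmult n (mpow n A (Suc i)) (mpow n A j) = mmult n A (mmult n (mpow n A i) (mpow n A j))"
    by (simp add: mmult_assoc)
  then show ?case using mmult_cong[OF eqv_refl Suc.IH, of A] by simp
qed

lemma mpow_comm: "eqv n (mmult n (mpow n A k) A) (mpow n A (Suc k))"
proof -
  have "eqv n (mmult n (mpow n A k) A) (mmult n (mpow n A k) (mpow n A 1))"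
    by (rule mmult_cong[OF eqv_refl], simp add: eqv_sym[OF mmult_mid_right])
  then show ?thesis using mpow_add[of n A k 1] eqv_trans by auto
qed


definition vn :: "nat \<Rightarrow> (nat set \<Rightarrow> complex) \<Rightarrow> real" where
  "vn n v = L2_set (\<lambda>y. cmod (v y)) (PP n)"

definition app :: "nat \<Rightarrow> op \<Rightarrow> (nat set \<Rightarrow> complex) \<Rightarrow> (nat set \<Rightarrow> complex)" where
  "app n A v = (\<lambda>x. \<Sum>y\<in>PP n. A x y * v y)"

lemma opnorm_alt: "opnorm n A = Sup {vn n (app n A v) | v. vn n v \<le> 1}"
  unfolding opnorm_def vn_def app_def L2_set_def by simp

lemma vn_nonneg[simp]: "0 \<le> vn n v" by (simp add: vn_def)

lemma vn_ge_entry: "y \<in> PP n \<Longrightarrow> cmod (v y) \<le> vn n v"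
proof -
  assume y: "y \<in> PP n"
  have "(cmod (v y))\<^sup>2 \<le> (\<Sum>z\<in>PP n. (cmod (v z))\<^sup>2)"
    by (rule member_le_sum[OF y]) auto
  then have "sqrt ((cmod (v y))\<^sup>2) \<le> sqrt (\<Sum>z\<in>PP n. (cmod (v z))\<^sup>2)"
    by (rule real_sqrt_le_mono)
  then show ?thesis by (simp add: vn_def L2_set_def)
qed

lemma vn_scale: "vn n (\<lambda>y. c * v y) = cmod c * vn n v"
  unfolding vn_def by (simp add: L2_set_right_distrib norm_mult)

lemma vn_add: "vn n (\<lambda>y. u y + w y) \<le> vn n u + vn n w"
proof -
  have "vn n (\<lambda>y. u y + w y) \<le> L2_set (\<lambda>y. cmod (u y) + cmod (w y)) (PP n)"
    unfolding vn_def by (rule L2_set_mono) (auto simp: norm_triangle_ineq)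
  also have "\<dots> \<le> vn n u + vn n w" unfolding vn_def by (rule L2_set_triangle_ineq)
  finally show ?thesis .
qed

lemma vn_cong: "(\<And>y. y \<in> PP n \<Longrightarrow> u y = w y) \<Longrightarrow> vn n u = vn n w"
  unfolding vn_def by (rule L2_set_cong) auto

lemma vn_zero: "vn n v = 0 \<Longrightarrow> y \<in> PP n \<Longrightarrow> v y = 0"
  using vn_ge_entry[of y n v] by auto

definition ksum :: "nat \<Rightarrow> op \<Rightarrow> real" where
  "ksum n A = (\<Sum>x\<in>PP n. \<Sum>y\<in>PP n. cmod (A x y))"

lemma app_bdd: "vn n v \<le> 1 \<Longrightarrow> vn n (app n A v) \<le> ksum n A"
proof -
  assume v: "vn n v \<le> 1"
  have "vn n (app n A v) \<le> (\<Sum>x\<in>PP n. cmod (app n A v x))"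
    unfolding vn_def by (rule L2_set_le_sum) auto
  also have "\<dots> \<le> (\<Sum>x\<in>PP n. \<Sum>y\<in>PP n. cmod (A x y))"
  proof (rule sum_mono)
    fix x assume x: "x \<in> PP n"
    have "cmod (app n A v x) \<le> (\<Sum>y\<in>PP n. cmod (A x y * v y))"
      unfolding app_def by (rule norm_sum)
    also have "\<dots> \<le> (\<Sum>y\<in>PP n. cmod (A x y))"
    proof (rule sum_mono)
      fix y assume y: "y \<in> PP n"
      have "cmod (v y) \<le> 1" using vn_ge_entry[OF y, of v] v by simp
      then show "cmod (A x y * v y) \<le> cmod (A x y)"
        by (simp add: norm_mult mult_left_le)
    qed
    finally show "cmod (app n A v x) \<le> (\<Sum>y\<in>PP n. cmod (A x y))" .
  qed
  finally show ?thesis by (simp add: ksum_def)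
qed

lemma opnorm_set_bdd: "bdd_above {vn n (app n A v) | v. vn n v \<le> 1}"
  by (rule bdd_aboveI[where M="ksum n A"]) (auto intro: app_bdd)

lemma opnorm_set_ne: "{vn n (app n A v) | v. vn n v \<le> 1} \<noteq> {}"
proof -
  have "vn n (\<lambda>_. 0) \<le> 1" by (simp add: vn_def L2_set_def)
  then show ?thesis by blast
qed

lemma opnorm_ub: "vn n v \<le> 1 \<Longrightarrow> vn n (app n A v) \<le> opnorm n A"
  unfolding opnorm_alt by (rule cSup_upper[OF _ opnorm_set_bdd]) blast

lemma opnorm_nonneg[simp]: "0 \<le> opnorm n A"
proof -
  have "vn n (\<lambda>_. 0) \<le> 1" by (simp add: vn_def L2_set_def)
  from opnorm_ub[OF this, of A] show ?thesis using vn_nonneg order_trans by blast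
qed

lemma app_scale: "app n A (\<lambda>y. c * v y) = (\<lambda>x. c * app n A v x)"
  unfolding app_def by (auto simp: sum_distrib_left mult_ac intro!: ext)

lemma opnorm_bound: "vn n (app n A v) \<le> opnorm n A * vn n v"
proof (cases "vn n v = 0")
  case True
  then have "vn n (app n A v) = vn n (app n A (\<lambda>_. 0))"
    by (intro vn_cong) (auto simp: app_def vn_zero intro!: sum.cong)
  also have "\<dots> = 0" by (simp add: app_def vn_def L2_set_def)
  finally show ?thesis using True by simp
next
  case False
  then have pos: "vn n v > 0" using vn_nonneg[of n v] by linarith
  define c where "c = complex_of_real (1 / vn n v)"
  have "vn n (\<lambda>y. c * v y) = cmod c * vn n v" by (rule vn_scale)
  moreover have "cmod c = 1 / vn n v" using pos unfolding c_def by (simp only: norm_of_real) simp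
  ultimately have "vn n (\<lambda>y. c * v y) \<le> 1" using pos by simp
  from opnorm_ub[OF this, of A] have "cmod c * vn n (app n A v) \<le> opnorm n A"
    by (simp add: app_scale vn_scale)
  then have "vn n (app n A v) / vn n v \<le> opnorm n A" using pos \<open>cmod c = 1 / vn n v\<close> by simp
  then show ?thesis using pos by (simp add: divide_le_eq)
qed

lemma opnorm_le: "0 \<le> c \<Longrightarrow> (\<And>v. vn n v \<le> 1 \<Longrightarrow> vn n (app n A v) \<le> c) \<Longrightarrow> opnorm n A \<le> c"
  unfolding opnorm_alt by (rule cSup_least[OF opnorm_set_ne]) blast

lemma opnorm_le2: "0 \<le> c \<Longrightarrow> (\<And>v. vn n (app n A v) \<le> c * vn n v) \<Longrightarrow> opnorm n A \<le> c"
  by (rule opnorm_le) (auto intro: order_trans mult_left_le)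

lemma app_cong: "eqv n A B \<Longrightarrow> x \<in> PP n \<Longrightarrow> app n A v x = app n B v x"
  unfolding app_def eqv_def by auto

lemma opnorm_cong: "eqv n A B \<Longrightarrow> opnorm n A = opnorm n B"
proof -
  assume e: "eqv n A B"
  have "vn n (app n A v) = vn n (app n B v)" for v by (rule vn_cong) (rule app_cong[OF e])
  then show ?thesis unfolding opnorm_alt by simp
qed

lemma app_mmult: "app n (mmult n A B) v = app n A (app n B v)"
  unfolding app_def mmult_def
  by (auto simp: sum_distrib_left sum_distrib_right mult_ac intro!: ext sum.swap[THEN trans])

lemma opnorm_mmult: "opnorm n (mmult n A B) \<le> opnorm n A * opnorm n B"
proof (rule opnorm_le2)
  fix v
  have "vn n (app n (mmult n A B) v) \<le> opnorm n A * vn n (app n B v)"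
    unfolding app_mmult by (rule opnorm_bound)
  also have "\<dots> \<le> opnorm n A * (opnorm n B * vn n v)"
    by (rule mult_left_mono[OF opnorm_bound]) simp
  finally show "vn n (app n (mmult n A B) v) \<le> opnorm n A * opnorm n B * vn n v" by (simp add: mult_ac)
qed simp

lemma app_madd: "app n (madd A B) v = (\<lambda>x. app n A v x + app n B v x)"
  unfolding app_def madd_def by (auto simp: distrib_right sum.distrib intro!: ext)
lemma app_msub: "app n (msub A B) v = (\<lambda>x. app n A v x + (-1) * app n B v x)"
  unfolding app_def msub_def by (auto simp: left_diff_distrib sum_subtractf intro!: ext)
lemma app_mscale: "app n (mscale c A) v = (\<lambda>x. c * app n A v x)"
  unfolding app_def mscale_def by (auto simp: sum_distrib_left mult_ac intro!: ext)

lemma opnorm_madd: "opnorm n (madd A B) \<le> opnorm n A + opnorm n B"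
proof (rule opnorm_le2)
  fix v
  have "vn n (app n (madd A B) v) \<le> vn n (app n A v) + vn n (app n B v)"
    unfolding app_madd by (rule vn_add)
  also have "\<dots> \<le> opnorm n A * vn n v + opnorm n B * vn n v"
    by (intro add_mono opnorm_bound)
  finally show "vn n (app n (madd A B) v) \<le> (opnorm n A + opnorm n B) * vn n v" by (simp add: algebra_simps)
qed simp

lemma opnorm_mscale: "opnorm n (mscale c A) \<le> cmod c * opnorm n A"
proof (rule opnorm_le2)
  fix v
  have "vn n (app n (mscale c A) v) = cmod c * vn n (app n A v)"
    unfolding app_mscale by (rule vn_scale)
  also have "\<dots> \<le> cmod c * (opnorm n A * vn n v)" by (intro mult_left_mono opnorm_bound) simp
  finally show "vn n (app n (mscale c A) v) \<le> cmod c * opnorm n A * vn n v" by (simp add: mult_ac)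
qed simp

lemma opnorm_msub: "opnorm n (msub A B) \<le> opnorm n A + opnorm n B"
proof (rule opnorm_le2)
  fix v
  have "vn n (app n (msub A B) v) \<le> vn n (app n A v) + vn n (\<lambda>x. (-1) * app n B v x)"
    unfolding app_msub by (rule vn_add)
  also have "\<dots> \<le> opnorm n A * vn n v + opnorm n B * vn n v"
    by (simp only: vn_scale) (auto intro!: add_mono opnorm_bound)
  finally show "vn n (app n (msub A B) v) \<le> (opnorm n A + opnorm n B) * vn n v" by (simp add: algebra_simps)
qed simp

lemma opnorm_zero: "eqv n A (\<lambda>x y. 0) \<Longrightarrow> opnorm n A = 0"
proof -
  assume "eqv n A (\<lambda>x y. 0)"
  then have "opnorm n A = opnorm n (\<lambda>x y. 0)" by (rule opnorm_cong)
  also have "opnorm n (\<lambda>x y. 0) \<le> 0"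
    by (rule opnorm_le) (auto simp: app_def vn_def L2_set_def)
  finally show ?thesis using opnorm_nonneg[of n A] by linarith
qed

lemma opnorm_entry: "x \<in> PP n \<Longrightarrow> y \<in> PP n \<Longrightarrow> cmod (A x y) \<le> opnorm n A"
proof -
  assume x: "x \<in> PP n" and y: "y \<in> PP n"
  define v where "v = (\<lambda>z. if z = y then (1::complex) else 0)"
  have "vn n v = 1" using y unfolding vn_def L2_set_def v_def
    by (simp add: if_distrib[of "\<lambda>u. (cmod u)\<^sup>2"] cong: if_cong)
  then have "vn n (app n A v) \<le> opnorm n A" by (intro opnorm_ub) simp
  moreover have "app n A v x = A x y" using y unfolding app_def v_def
    by (simp add: if_distrib[of "\<lambda>u. A x _ * u"] cong: if_cong)
  moreover have "cmod (app n A v x) \<le> vn n (app n A v)" by (rule vn_ge_entry[OF x])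
  ultimately show ?thesis by simp
qed

lemma comm_mmult: "comm n (mmult n X Y) B = madd (mmult n X (comm n Y B)) (mmult n (comm n X B) Y)"
  unfolding comm_def mmult_msub_left mmult_msub_right mmult_assoc
  by (auto simp: msub_def madd_def intro!: ext)

lemma opnorm_comm_mmult:
  "opnorm n (comm n (mmult n X Y) B) \<le> opnorm n X * opnorm n (comm n Y B) + opnorm n (comm n X B) * opnorm n Y"
  unfolding comm_mmult by (rule order_trans[OF opnorm_madd add_mono[OF opnorm_mmult opnorm_mmult]])


lemma vn_sq: "(vn n v)\<^sup>2 = (\<Sum>y\<in>PP n. (cmod (v y))\<^sup>2)"
  unfolding vn_def L2_set_def by (simp add: sum_nonneg)

lemma vn_sq_complex: "complex_of_real ((vn n v)\<^sup>2) = (\<Sum>y\<in>PP n. v y * cnj (v y))"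
  unfolding vn_sq of_real_sum complex_norm_square by simp

lemma quad_form:
  "complex_of_real ((vn n (app n A v))\<^sup>2) =
     (\<Sum>y\<in>PP n. \<Sum>z\<in>PP n. cnj (v y) * v z * mmult n (madj A) A y z)"
proof -
  have "complex_of_real ((vn n (app n A v))\<^sup>2) =
        (\<Sum>x\<in>PP n. (\<Sum>z\<in>PP n. A x z * v z) * (\<Sum>y\<in>PP n. cnj (A x y) * cnj (v y)))"
    unfolding vn_sq_complex app_def by (simp add: cnj_sum)
  also have "\<dots> = (\<Sum>x\<in>PP n. \<Sum>z\<in>PP n. \<Sum>y\<in>PP n. cnj (v y) * v z * (cnj (A x y) * A x z))"
    by (simp add: sum_product mult_ac)
  also have "\<dots> = (\<Sum>z\<in>PP n. \<Sum>x\<in>PP n. \<Sum>y\<in>PP n. cnj (v y) * v z * (cnj (A x y) * A x z))"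
    by (rule sum.swap)
  also have "\<dots> = (\<Sum>z\<in>PP n. \<Sum>y\<in>PP n. \<Sum>x\<in>PP n. cnj (v y) * v z * (cnj (A x y) * A x z))"
    by (rule sum.cong[OF refl], rule sum.swap)
  also have "\<dots> = (\<Sum>y\<in>PP n. \<Sum>z\<in>PP n. \<Sum>x\<in>PP n. cnj (v y) * v z * (cnj (A x y) * A x z))"
    by (rule sum.swap)
  also have "\<dots> = (\<Sum>y\<in>PP n. \<Sum>z\<in>PP n. cnj (v y) * v z * mmult n (madj A) A y z)"
    unfolding mmult_def madj_def by (simp add: sum_distrib_left)
  finally show ?thesis .
qed

lemma opnorm_diag_le1:
  assumes e: "eqv n (mmult n (madj A) A) D"
    and d: "\<And>x y. x \<in> PP n \<Longrightarrow> y \<in> PP n \<Longrightarrow> D x y = (if x = y then complex_of_real (d x) else 0)"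
    and d01: "\<And>x. x \<in> PP n \<Longrightarrow> 0 \<le> d x \<and> d x \<le> 1"
  shows "opnorm n A \<le> 1"
proof (rule opnorm_le2)
  fix v
  have "complex_of_real ((vn n (app n A v))\<^sup>2) =
     (\<Sum>y\<in>PP n. \<Sum>z\<in>PP n. cnj (v y) * v z * (if y = z then complex_of_real (d y) else 0))"
    unfolding quad_form using eqvD[OF e] d by (intro sum.cong refl) auto
  also have "\<dots> = (\<Sum>y\<in>PP n. cnj (v y) * v y * complex_of_real (d y))"
    by (intro sum.cong refl) (simp add: if_distrib[of "\<lambda>u. _ * u"] sum.delta cong: if_cong)
  also have "\<dots> = complex_of_real (\<Sum>y\<in>PP n. d y * (cmod (v y))\<^sup>2)"
    unfolding of_real_sum of_real_mult complex_norm_square by (intro sum.cong refl) (simp add: mult_ac)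
  finally have "(vn n (app n A v))\<^sup>2 = (\<Sum>y\<in>PP n. d y * (cmod (v y))\<^sup>2)" by (simp only: of_real_eq_iff)
  also have "\<dots> \<le> (\<Sum>y\<in>PP n. (cmod (v y))\<^sup>2)"
    by (intro sum_mono) (auto simp: d01 mult_left_le_one_le)
  also have "\<dots> = (vn n v)\<^sup>2" by (simp add: vn_sq)
  finally show "vn n (app n A v) \<le> 1 * vn n v" by (simp add: power_mono_iff)
qed simp


lemma mexp_scale: "mexp n (mscale c H) x y = (\<Sum>k. c ^ k * mpow n H k x y / fact k)"
  unfolding mexp_def mpow_mscale by (simp add: mscale_def)

lemma mpow_bound: "x \<in> PP n \<Longrightarrow> y \<in> PP n \<Longrightarrow> cmod (mpow n H k x y) \<le> ksum n H ^ k"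
proof (induction k arbitrary: x)
  case 0 then show ?case by (simp add: mid_def)
next
  case (Suc k)
  have "cmod (mpow n H (Suc k) x y) \<le> (\<Sum>z\<in>PP n. cmod (H x z * mpow n H k z y))"
    unfolding mpow.simps mmult_def by (rule norm_sum)
  also have "\<dots> \<le> (\<Sum>z\<in>PP n. cmod (H x z) * ksum n H ^ k)"
  proof (rule sum_mono)
    fix z assume z: "z \<in> PP n"
    show "cmod (H x z * mpow n H k z y) \<le> cmod (H x z) * ksum n H ^ k"
      unfolding norm_mult by (rule mult_left_mono[OF Suc.IH[OF z Suc.prems(2)]]) simp
  qed
  also have "\<dots> = (\<Sum>z\<in>PP n. cmod (H x z)) * ksum n H ^ k" by (simp add: sum_distrib_right)
  also have "\<dots> \<le> ksum n H * ksum n H ^ k"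
  proof (rule mult_right_mono)
    show "(\<Sum>z\<in>PP n. cmod (H x z)) \<le> ksum n H" unfolding ksum_def
      by (rule member_le_sum[OF Suc.prems(1), where f="\<lambda>x. \<Sum>z\<in>PP n. cmod (H x z)"]) (simp_all add: sum_nonneg)
    show "0 \<le> ksum n H ^ k" by (simp add: ksum_def sum_nonneg)
  qed
  finally show ?case by simp
qed

lemma exp_term_summable:
  assumes "x \<in> PP n" "y \<in> PP n"
  shows "summable (\<lambda>k. norm (c ^ k * mpow n H k x y / fact k))"
proof (rule summable_comparison_test'[where N=0])
  show "summable (\<lambda>k. inverse (fact k) * (cmod c * ksum n H) ^ k)" by (rule summable_exp)
  fix k :: nat
  have "norm (norm (c ^ k * mpow n H k x y / fact k)) = cmod c ^ k * cmod (mpow n H k x y) / fact k"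
    by (simp add: norm_mult norm_divide norm_power)
  also have "\<dots> \<le> cmod c ^ k * ksum n H ^ k / fact k"
    by (intro divide_right_mono mult_left_mono mpow_bound assms) simp_all
  also have "\<dots> = inverse (fact k) * (cmod c * ksum n H) ^ k"
    by (simp add: power_mult_distrib divide_inverse)
  finally show "norm (norm (c ^ k * mpow n H k x y / fact k)) \<le> inverse (fact k) * (cmod c * ksum n H) ^ k" .
qed
lemma binom_fact_sum:
  "(\<Sum>i\<le>N. c ^ i * d ^ (N - i) / (fact i * fact (N - i))) = (c + d) ^ N / (fact N :: complex)"
proof -
  have "(c + d) ^ N = (\<Sum>i\<le>N. of_nat (N choose i) * c ^ i * d ^ (N - i))" by (rule binomial_ring)
  also have "\<dots> = (\<Sum>i\<le>N. fact N * (c ^ i * d ^ (N - i) / (fact i * fact (N - i))))"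
    by (intro sum.cong refl) (simp add: binomial_fact)
  also have "\<dots> = fact N * (\<Sum>i\<le>N. c ^ i * d ^ (N - i) / (fact i * fact (N - i)))"
    by (simp add: sum_distrib_left)
  finally show ?thesis by (simp add: field_simps)
qed

lemma mexp_mult:
  "eqv n (mmult n (mexp n (mscale c H)) (mexp n (mscale d H))) (mexp n (mscale (c + d) H))"
  unfolding eqv_def
proof (intro ballI)
  fix x y assume x: "x \<in> PP n" and y: "y \<in> PP n"
  let ?a = "\<lambda>z k. c ^ k * mpow n H k x z / fact k"
  let ?b = "\<lambda>z k. d ^ k * mpow n H k z y / fact k"
  have "mmult n (mexp n (mscale c H)) (mexp n (mscale d H)) x y = (\<Sum>z\<in>PP n. (\<Sum>k. ?a z k) * (\<Sum>k. ?b z k))"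
    unfolding mmult_def mexp_scale ..
  also have "\<dots> = (\<Sum>z\<in>PP n. \<Sum>k. \<Sum>i\<le>k. ?a z i * ?b z (k - i))"
    using x y by (intro sum.cong refl Cauchy_product exp_term_summable) auto
  also have "\<dots> = (\<Sum>k. \<Sum>z\<in>PP n. \<Sum>i\<le>k. ?a z i * ?b z (k - i))"
    using x y by (intro suminf_sum[symmetric] summable_Cauchy_product exp_term_summable) auto
  also have "\<dots> = (\<Sum>k. (c + d) ^ k * mpow n H k x y / fact k)"
  proof (rule arg_cong[where f=suminf], rule ext)
    fix k
    have "(\<Sum>z\<in>PP n. \<Sum>i\<le>k. ?a z i * ?b z (k - i)) =
          (\<Sum>i\<le>k. c ^ i * d ^ (k - i) / (fact i * fact (k - i)) * mmult n (mpow n H i) (mpow n H (k - i)) x y)"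
    proof -
      have "(\<Sum>z\<in>PP n. \<Sum>i\<le>k. ?a z i * ?b z (k - i)) = (\<Sum>i\<le>k. \<Sum>z\<in>PP n. ?a z i * ?b z (k - i))"
        by (rule sum.swap)
      also have "\<dots> = (\<Sum>i\<le>k. \<Sum>z\<in>PP n. c ^ i * d ^ (k - i) / (fact i * fact (k - i)) * (mpow n H i x z * mpow n H (k - i) z y))"
        by (intro sum.cong refl) (simp add: divide_inverse mult_ac)
      finally show ?thesis unfolding mmult_def by (simp add: sum_distrib_left)
    qed
    also have "\<dots> = (\<Sum>i\<le>k. c ^ i * d ^ (k - i) / (fact i * fact (k - i)) * mpow n H k x y)"
      using eqvD[OF mpow_add x y] by (intro sum.cong refl) auto
    also have "\<dots> = (c + d) ^ k * mpow n H k x y / fact k"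
      using binom_fact_sum[of c d k] sum_distrib_right[of "\<lambda>i. c ^ i * d ^ (k - i) / (fact i * fact (k - i))" "{..k}" "mpow n H k x y"]
      by simp
    finally show "(\<Sum>z\<in>PP n. \<Sum>i\<le>k. ?a z i * ?b z (k - i)) = (c + d) ^ k * mpow n H k x y / fact k" .
  qed
  also have "\<dots> = mexp n (mscale (c + d) H) x y" unfolding mexp_scale ..
  finally show "mmult n (mexp n (mscale c H)) (mexp n (mscale d H)) x y = mexp n (mscale (c + d) H) x y" .
qed

lemma mexp_zero: "eqv n (mexp n (mscale 0 H)) (mid n)"
  unfolding eqv_def
proof (intro ballI)
  fix x y
  have "(\<Sum>k. (0::complex) ^ k * mpow n H k x y / fact k) = (\<Sum>k\<in>{0}. (0::complex) ^ k * mpow n H k x y / fact k)"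
    by (rule suminf_finite) simp_all
  then show "mexp n (mscale 0 H) x y = mid n x y" unfolding mexp_scale by simp
qed

lemma madj_mpow: assumes h: "eqv n (madj H) H" shows "eqv n (madj (mpow n H k)) (mpow n H k)"
proof (induction k)
  case 0 then show ?case by simp
next
  case (Suc k)
  have "madj (mpow n H (Suc k)) = mmult n (madj (mpow n H k)) (madj H)" by (simp add: madj_mmult)
  moreover have "eqv n (mmult n (madj (mpow n H k)) (madj H)) (mmult n (mpow n H k) H)"
    by (rule mmult_cong[OF Suc.IH h])
  ultimately show ?case using mpow_comm[of n H k] eqv_trans by metis
qed

lemma madj_mexp: assumes h: "eqv n (madj H) H"
  shows "eqv n (madj (mexp n (mscale c H))) (mexp n (mscale (cnj c) H))"
  unfolding eqv_def
proof (intro ballI)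
  fix x y assume x: "x \<in> PP n" and y: "y \<in> PP n"
  define f where "f = (\<lambda>k. c ^ k * mpow n H k y x / fact k)"
  have s: "summable f" unfolding f_def by (rule summable_norm_cancel[OF exp_term_summable[OF y x]])
  have "(\<lambda>k. cnj (f k)) sums cnj (suminf f)"
    by (rule sums_cnj[THEN iffD2, OF summable_sums[OF s]])
  then have e1: "(\<Sum>k. cnj (f k)) = cnj (suminf f)" by (rule sums_unique[symmetric])
  have e2: "cnj (f k) = cnj c ^ k * mpow n H k x y / fact k" for k
  proof -
    have "cnj (mpow n H k y x) = mpow n H k x y"
      using eqvD[OF madj_mpow[OF h, of k] x y] by (simp add: madj_def)
    moreover have "cnj (fact k :: complex) = fact k"
      by (metis complex_cnj_of_nat of_nat_fact)
    ultimately show ?thesis unfolding f_def complex_cnj_mult complex_cnj_divide complex_cnj_power by simp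
  qed
  have "madj (mexp n (mscale c H)) x y = cnj (suminf f)"
    unfolding madj_def mexp_scale f_def ..
  also have "\<dots> = (\<Sum>k. cnj c ^ k * mpow n H k x y / fact k)" unfolding e1[symmetric] e2 ..
  also have "\<dots> = mexp n (mscale (cnj c) H) x y" unfolding mexp_scale ..
  finally show "madj (mexp n (mscale c H)) x y = mexp n (mscale (cnj c) H) x y" .
qed


declare eqv_trans[trans]

definition id2 :: "bool \<Rightarrow> bool \<Rightarrow> complex" where "id2 a b = (if a = b then 1 else 0)"
definition mul2 :: "(bool \<Rightarrow> bool \<Rightarrow> complex) \<Rightarrow> (bool \<Rightarrow> bool \<Rightarrow> complex) \<Rightarrow> bool \<Rightarrow> bool \<Rightarrow> complex" where
  "mul2 M N = (\<lambda>a b. M a True * N True b + M a False * N False b)"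
definition adj2 :: "(bool \<Rightarrow> bool \<Rightarrow> complex) \<Rightarrow> bool \<Rightarrow> bool \<Rightarrow> complex" where
  "adj2 M = (\<lambda>a b. cnj (M b a))"
definition e11 :: "bool \<Rightarrow> bool \<Rightarrow> complex" where "e11 a b = (if a \<and> b then 1 else 0)"

definition prodop :: "nat \<Rightarrow> (nat \<Rightarrow> bool \<Rightarrow> bool \<Rightarrow> complex) \<Rightarrow> op" where
  "prodop n F = (\<lambda>x y. \<Prod>k\<in>{1..n}. F k (k \<in> x) (k \<in> y))"

lemma bool_ext2: "(\<And>a b. M a b = N a b) \<Longrightarrow> M = N" by (auto intro!: ext)

lemma mul2_id_left[simp]: "mul2 id2 M = M" unfolding mul2_def id2_def by (intro bool_ext2) auto
lemma mul2_id_right[simp]: "mul2 M id2 = M" unfolding mul2_def id2_def by (intro bool_ext2) auto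
lemma mul2_zz[simp]: "mul2 pauli_z pauli_z = id2" unfolding mul2_def id2_def pauli_z_def
  by (intro bool_ext2) auto
lemma adj2_z[simp]: "adj2 pauli_z = pauli_z" unfolding adj2_def pauli_z_def by (intro bool_ext2) auto
lemma adj2_x[simp]: "adj2 pauli_x = pauli_x" unfolding adj2_def pauli_x_def by (intro bool_ext2) auto
lemma adj2_y[simp]: "adj2 pauli_y = pauli_y" unfolding adj2_def pauli_y_def by (intro bool_ext2) auto
lemma adj2_id[simp]: "adj2 id2 = id2" unfolding adj2_def id2_def by (intro bool_ext2) auto
lemma mul2_lower_adj: "mul2 lower (adj2 lower) = e11"
  unfolding mul2_def adj2_def lower_def e11_def pauli_x_def pauli_y_def by (intro bool_ext2) auto

lemma madj_site: "madj (site j M) = site j (adj2 M)"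
  unfolding madj_def site_def adj2_def by (auto intro!: ext)

lemma madj_prodop: "madj (prodop n F) = prodop n (\<lambda>k. adj2 (F k))"
  unfolding madj_def prodop_def adj2_def by (auto simp: cnj_prod intro!: ext)

lemma prod_split_Pow:
  assumes "finite S" "X \<subseteq> S"
  shows "(\<Prod>k\<in>S. h k (k \<in> X)) = (\<Prod>k\<in>X. h k True) * (\<Prod>k\<in>S - X. h k False)"
proof -
  have "(\<Prod>k\<in>S. h k (k \<in> X)) = (\<Prod>k\<in>X. h k (k \<in> X)) * (\<Prod>k\<in>S - X. h k (k \<in> X))"
    using assms by (metis prod.subset_diff mult.commute)
  also have "\<dots> = (\<Prod>k\<in>X. h k True) * (\<Prod>k\<in>S - X. h k False)"
    by (intro arg_cong2[where f="(*)"] prod.cong) auto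
  finally show ?thesis .
qed

lemma mmult_prodop: "mmult n (prodop n F) (prodop n G) = prodop n (\<lambda>k. mul2 (F k) (G k))"
proof (intro ext)
  fix x y
  let ?h = "\<lambda>k b. F k (k \<in> x) b * G k b (k \<in> y)"
  have "mmult n (prodop n F) (prodop n G) x y = (\<Sum>z\<in>PP n. \<Prod>k\<in>{1..n}. ?h k (k \<in> z))"
    unfolding mmult_def prodop_def by (simp add: prod.distrib)
  also have "\<dots> = (\<Sum>z\<in>PP n. (\<Prod>k\<in>z. ?h k True) * (\<Prod>k\<in>{1..n} - z. ?h k False))"
    by (intro sum.cong refl prod_split_Pow) auto
  also have "\<dots> = (\<Prod>k\<in>{1..n}. ?h k True + ?h k False)"
    by (rule prod_add[symmetric]) simp
  also have "\<dots> = prodop n (\<lambda>k. mul2 (F k) (G k)) x y"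
    unfolding prodop_def mul2_def by simp
  finally show "mmult n (prodop n F) (prodop n G) x y = prodop n (\<lambda>k. mul2 (F k) (G k)) x y" .
qed

lemma prod_id2: "finite S \<Longrightarrow> (\<Prod>k\<in>S. id2 (P k) (Q k)) = (if \<forall>k\<in>S. P k = Q k then 1 else 0)"
  by (induction S rule: finite_induct) (auto simp: id2_def)

lemma mid_prodop: "eqv n (mid n) (prodop n (\<lambda>k. id2))"
  unfolding eqv_def
proof (intro ballI)
  fix x y assume x: "x \<in> PP n" and y: "y \<in> PP n"
  have "(\<forall>k\<in>{1..n}. (k \<in> x) = (k \<in> y)) \<longleftrightarrow> x = y" using x y by auto
  then show "mid n x y = prodop n (\<lambda>k. id2) x y"
    unfolding prodop_def mid_def by (simp add: prod_id2)
qed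

lemma site_prodop:
  assumes j: "j \<in> {1..n}"
  shows "eqv n (site j M) (prodop n ((\<lambda>k. id2)(j := M)))"
  unfolding eqv_def
proof (intro ballI)
  fix x y assume x: "x \<in> PP n" and y: "y \<in> PP n"
  have "prodop n ((\<lambda>k. id2)(j := M)) x y =
        M (j \<in> x) (j \<in> y) * (\<Prod>k\<in>{1..n} - {j}. ((\<lambda>k. id2)(j := M)) k (k \<in> x) (k \<in> y))"
    unfolding prodop_def using j by (simp add: prod.remove)
  also have "\<dots> = M (j \<in> x) (j \<in> y) * (\<Prod>k\<in>{1..n} - {j}. id2 (k \<in> x) (k \<in> y))"
    by (intro arg_cong2[where f="(*)"] prod.cong) auto
  also have "\<dots> = M (j \<in> x) (j \<in> y) * (if \<forall>k\<in>{1..n} - {j}. (k \<in> x) = (k \<in> y) then 1 else 0)"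
    by (simp add: prod_id2)
  also have "(\<forall>k\<in>{1..n} - {j}. (k \<in> x) = (k \<in> y)) \<longleftrightarrow> x - {j} = y - {j}"
    using x y by auto
  finally have eq: "prodop n ((\<lambda>k. id2)(j := M)) x y = M (j \<in> x) (j \<in> y) * (if x - {j} = y - {j} then 1 else 0)" .
  show "site j M x y = prodop n ((\<lambda>k. id2)(j := M)) x y"
    unfolding site_def eq by simp
qed

lemma site_site_prodop:
  assumes j: "j \<in> {1..n}" and k: "k \<in> {1..n}" and jk: "j \<noteq> k"
  shows "eqv n (mmult n (site j M) (site k N)) (prodop n ((\<lambda>i. id2)(j := M, k := N)))"
proof -
  have "eqv n (mmult n (site j M) (site k N)) (mmult n (prodop n ((\<lambda>k. id2)(j := M))) (prodop n ((\<lambda>i. id2)(k := N))))"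
    by (intro mmult_cong site_prodop j k)
  also have "mmult n (prodop n ((\<lambda>k. id2)(j := M))) (prodop n ((\<lambda>i. id2)(k := N))) = prodop n ((\<lambda>i. id2)(j := M, k := N))"
    unfolding mmult_prodop using jk by (intro arg_cong[where f="prodop n"] ext) auto
  finally show ?thesis .
qed

lemma site_comm:
  assumes j: "j \<in> {1..n}" and k: "k \<in> {1..n}" and jk: "j \<noteq> k"
  shows "eqv n (mmult n (site j M) (site k N)) (mmult n (site k N) (site j M))"
proof -
  have "(\<lambda>i. id2)(j := M, k := N) = (\<lambda>i. id2)(k := N, j := M)" using jk by (rule fun_upd_twist)
  then show ?thesis using site_site_prodop[OF j k jk, of M N] site_site_prodop[OF k j jk[symmetric], of N M]
    by (metis eqv_sym eqv_trans)
qed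

lemma site_mult_prodop:
  assumes j: "j \<in> {1..n}"
  shows "eqv n (mmult n (site j M) (prodop n F)) (prodop n (F(j := mul2 M (F j))))"
proof -
  have "eqv n (mmult n (site j M) (prodop n F)) (mmult n (prodop n ((\<lambda>k. id2)(j := M))) (prodop n F))"
    by (intro mmult_cong site_prodop j eqv_refl)
  also have "mmult n (prodop n ((\<lambda>k. id2)(j := M))) (prodop n F) = prodop n (F(j := mul2 M (F j)))"
    unfolding mmult_prodop by (intro arg_cong[where f="prodop n"] ext) auto
  finally show ?thesis .
qed

lemma foldr_prodop:
  assumes "distinct ks" "set ks \<subseteq> {1..n}" "eqv n B (prodop n G)"
  shows "eqv n (foldr (\<lambda>k M. mmult n (site k W) M) ks B)
                (prodop n (\<lambda>k. if k \<in> set ks then mul2 W (G k) else G k))"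
  using assms
proof (induction ks)
  case Nil then show ?case by simp
next
  case (Cons k ks)
  have "eqv n (foldr (\<lambda>k M. mmult n (site k W) M) (k # ks) B)
     (mmult n (site k W) (prodop n (\<lambda>k. if k \<in> set ks then mul2 W (G k) else G k)))"
    using Cons by (simp add: mmult_cong)
  also have "eqv n \<dots> (prodop n ((\<lambda>k. if k \<in> set ks then mul2 W (G k) else G k)(k := mul2 W (G k))))"
    using site_mult_prodop[of k n W "\<lambda>k. if k \<in> set ks then mul2 W (G k) else G k"] Cons.prems by simp
  also have "(\<lambda>k. if k \<in> set ks then mul2 W (G k) else G k)(k := mul2 W (G k)) =
      (\<lambda>i. if i \<in> set (k # ks) then mul2 W (G i) else G i)"
    by auto
  finally show ?case .
qed


lemma eq_eqv_trans[trans]: "A = B \<Longrightarrow> eqv n B C \<Longrightarrow> eqv n A C" by simp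
lemma eqv_eq_trans[trans]: "eqv n A B \<Longrightarrow> B = C \<Longrightarrow> eqv n A C" by simp

lemma msum_cong: "(\<And>j. j \<in> S \<Longrightarrow> eqv n (F j) (G j)) \<Longrightarrow> eqv n (msum S F) (msum S G)"
  unfolding eqv_def msum_def by (auto intro!: sum.cong)

lemma madj_HXY: "eqv n (madj (HXY lam \<omega> n)) (HXY lam \<omega> n)"
proof -
  have "madj (HXY lam \<omega> n) = madd
     (mscale (-1) (msum {1..<n} (\<lambda>j. madd (mmult n (site (j+1) pauli_x) (site j pauli_x))
                                            (mmult n (site (j+1) pauli_y) (site j pauli_y)))))
     (msum {1..n} (\<lambda>j. mscale (complex_of_real (pot lam \<omega> j)) (site j pauli_z)))"
    unfolding HXY_def madj_madd madj_mscale madj_msum madj_mmult madj_site adj2_x adj2_y adj2_z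
      complex_cnj_complex_of_real complex_cnj_minus complex_cnj_one ..
  also have "eqv n \<dots> (HXY lam \<omega> n)"
    unfolding HXY_def
  proof (rule madd_cong[OF mscale_cong[OF msum_cong] eqv_refl])
    fix j assume j: "j \<in> {1..<n}"
    then have j1: "j \<in> {1..n}" "j + 1 \<in> {1..n}" "j + 1 \<noteq> j" by auto
    show "eqv n (madd (mmult n (site (j+1) pauli_x) (site j pauli_x)) (mmult n (site (j+1) pauli_y) (site j pauli_y)))
                (madd (mmult n (site j pauli_x) (site (j+1) pauli_x)) (mmult n (site j pauli_y) (site (j+1) pauli_y)))"
      by (rule madd_cong; rule site_comm[OF j1(2) j1(1) j1(3)])
  qed
  finally show ?thesis .
qed

abbreviation UU :: "real \<Rightarrow> real \<Rightarrow> nat \<Rightarrow> real \<Rightarrow> op" where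
  "UU lam \<omega> n t \<equiv> mexp n (mscale (\<i> * complex_of_real t) (HXY lam \<omega> n))"
abbreviation VV :: "real \<Rightarrow> real \<Rightarrow> nat \<Rightarrow> real \<Rightarrow> op" where
  "VV lam \<omega> n t \<equiv> mexp n (mscale (- \<i> * complex_of_real t) (HXY lam \<omega> n))"

lemma VU: "eqv n (mmult n (VV lam \<omega> n t) (UU lam \<omega> n t)) (mid n)"
  using eqv_trans[OF mexp_mult[of n "- \<i> * complex_of_real t" "HXY lam \<omega> n" "\<i> * complex_of_real t"]]
    mexp_zero[of n "HXY lam \<omega> n"] by simp

lemma UV: "eqv n (mmult n (UU lam \<omega> n t) (VV lam \<omega> n t)) (mid n)"
  using eqv_trans[OF mexp_mult[of n "\<i> * complex_of_real t" "HXY lam \<omega> n" "- \<i> * complex_of_real t"]]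
    mexp_zero[of n "HXY lam \<omega> n"] by simp

lemma madj_U: "eqv n (madj (UU lam \<omega> n t)) (VV lam \<omega> n t)"
  using madj_mexp[OF madj_HXY[of n lam \<omega>], where c="\<i> * complex_of_real t"] by simp
lemma madj_V: "eqv n (madj (VV lam \<omega> n t)) (UU lam \<omega> n t)"
  using madj_mexp[OF madj_HXY[of n lam \<omega>], where c="- \<i> * complex_of_real t"] by simp

lemma opnorm_mid_like:
  assumes "eqv n (mmult n (madj A) A) (mid n)" shows "opnorm n A \<le> 1"
  by (rule opnorm_diag_le1[OF assms, where d="\<lambda>_. 1"]) (auto simp: mid_def)

lemma opnorm_U: "opnorm n (UU lam \<omega> n t) \<le> 1"
  by (rule opnorm_mid_like, rule eqv_trans[OF mmult_cong[OF madj_U eqv_refl] VU])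
lemma opnorm_V: "opnorm n (VV lam \<omega> n t) \<le> 1"
  by (rule opnorm_mid_like, rule eqv_trans[OF mmult_cong[OF madj_V eqv_refl] UV])

lemma tau_alt: "tau lam \<omega> n t X = mmult n (mmult n (UU lam \<omega> n t) X) (VV lam \<omega> n t)"
  unfolding tau_def ..

lemma tau_cong: "eqv n X Y \<Longrightarrow> eqv n (tau lam \<omega> n t X) (tau lam \<omega> n t Y)"
  unfolding tau_def by (intro mmult_cong eqv_refl)

lemma tau_mult: "eqv n (tau lam \<omega> n t (mmult n X Y)) (mmult n (tau lam \<omega> n t X) (tau lam \<omega> n t Y))"
proof -
  let ?U = "UU lam \<omega> n t" and ?V = "VV lam \<omega> n t"
  have "mmult n (tau lam \<omega> n t X) (tau lam \<omega> n t Y) = mmult n ?U (mmult n X (mmult n (mmult n ?V ?U) (mmult n Y ?V)))"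
    unfolding tau_alt by (simp only: mmult_assoc)
  also have "eqv n \<dots> (mmult n ?U (mmult n X (mmult n (mid n) (mmult n Y ?V))))"
    by (intro mmult_cong eqv_refl VU)
  also have "eqv n \<dots> (mmult n ?U (mmult n X (mmult n Y ?V)))"
    by (intro mmult_cong eqv_refl mmult_mid_left)
  also have "\<dots> = tau lam \<omega> n t (mmult n X Y)"
    unfolding tau_alt by (simp only: mmult_assoc)
  finally show ?thesis by (rule eqv_sym)
qed

lemma tau_mid: "eqv n (tau lam \<omega> n t (mid n)) (mid n)"
proof -
  have "eqv n (tau lam \<omega> n t (mid n)) (mmult n (UU lam \<omega> n t) (VV lam \<omega> n t))"
    unfolding tau_alt by (intro mmult_cong mmult_mid_right eqv_refl)
  then show ?thesis using UV eqv_trans by blast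
qed

lemma opnorm_tau: "opnorm n (tau lam \<omega> n t X) \<le> opnorm n X"
proof -
  have "opnorm n (tau lam \<omega> n t X) \<le> opnorm n (mmult n (UU lam \<omega> n t) X) * opnorm n (VV lam \<omega> n t)"
    unfolding tau_alt by (rule opnorm_mmult)
  also have "\<dots> \<le> opnorm n (mmult n (UU lam \<omega> n t) X)"
    using opnorm_V[where n=n and lam=lam and \<omega>=\<omega> and t=t] by (simp add: mult_left_le)
  also have "\<dots> \<le> opnorm n (UU lam \<omega> n t) * opnorm n X" by (rule opnorm_mmult)
  also have "\<dots> \<le> opnorm n X"
    using opnorm_U[where n=n and lam=lam and \<omega>=\<omega> and t=t] by (simp add: mult_left_le_one_le)
  finally show ?thesis .
qed

lemma tau_madd: "tau lam \<omega> n t (madd X Y) = madd (tau lam \<omega> n t X) (tau lam \<omega> n t Y)"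
  unfolding tau_def by (simp add: mmult_madd_left mmult_madd_right)
lemma tau_msub: "tau lam \<omega> n t (msub X Y) = msub (tau lam \<omega> n t X) (tau lam \<omega> n t Y)"
  unfolding tau_def by (simp add: mmult_msub_left mmult_msub_right)
lemma tau_mscale: "tau lam \<omega> n t (mscale c X) = mscale c (tau lam \<omega> n t X)"
  unfolding tau_def by (simp add: mmult_mscale_left mmult_mscale_right)

lemma comm_madd: "comm n (madd X Y) B = madd (comm n X B) (comm n Y B)"
  unfolding comm_def mmult_madd_left mmult_madd_right by (auto simp: madd_def msub_def intro!: ext)
lemma comm_msub: "comm n (msub X Y) B = msub (comm n X B) (comm n Y B)"
  unfolding comm_def mmult_msub_left mmult_msub_right by (auto simp: msub_def intro!: ext)
lemma comm_mscale: "comm n (mscale c X) B = mscale c (comm n X B)"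
  unfolding comm_def mmult_mscale_left mmult_mscale_right by (auto simp: mscale_def msub_def algebra_simps intro!: ext)

lemma comm_mid: "opnorm n (comm n (mid n) B) = 0"
proof (rule opnorm_zero)
  have "eqv n (comm n (mid n) B) (msub B B)" unfolding comm_def
    by (rule msub_cong[OF mmult_mid_left mmult_mid_right])
  then show "eqv n (comm n (mid n) B) (\<lambda>x y. 0)" by (simp add: eqv_def msub_def)
qed

lemma comm_tau_mult:
  assumes "opnorm n X \<le> 1" "opnorm n Y \<le> 1"
  shows "opnorm n (comm n (tau lam \<omega> n t (mmult n X Y)) B)
     \<le> opnorm n (comm n (tau lam \<omega> n t X) B) + opnorm n (comm n (tau lam \<omega> n t Y) B)"
proof -
  let ?X = "tau lam \<omega> n t X" and ?Y = "tau lam \<omega> n t Y"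
  have "opnorm n (comm n (tau lam \<omega> n t (mmult n X Y)) B) = opnorm n (comm n (mmult n ?X ?Y) B)"
    by (intro opnorm_cong comm_cong tau_mult eqv_refl)
  also have "\<dots> \<le> opnorm n ?X * opnorm n (comm n ?Y B) + opnorm n (comm n ?X B) * opnorm n ?Y"
    by (rule opnorm_comm_mmult)
  also have "\<dots> \<le> 1 * opnorm n (comm n ?Y B) + opnorm n (comm n ?X B) * 1"
    using opnorm_tau[of n lam \<omega> t X] opnorm_tau[of n lam \<omega> t Y] assms
    by (intro add_mono mult_right_mono mult_left_mono) auto
  finally show ?thesis by simp
qed


lemma eq_eqv_trans'[trans]: "A = B \<Longrightarrow> eqv n B C \<Longrightarrow> eqv n A C" by simp
lemma eqv_eq_trans'[trans]: "eqv n A B \<Longrightarrow> B = C \<Longrightarrow> eqv n A C" by simp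

definition good2 :: "(bool \<Rightarrow> bool \<Rightarrow> complex) \<Rightarrow> bool" where
  "good2 M \<longleftrightarrow> mul2 (adj2 M) M True False = 0 \<and> mul2 (adj2 M) M False True = 0 \<and>
     (cmod (M True True))\<^sup>2 + (cmod (M False True))\<^sup>2 \<le> 1 \<and>
     (cmod (M True False))\<^sup>2 + (cmod (M False False))\<^sup>2 \<le> 1"

lemma mul2_adj_diag: "mul2 (adj2 M) M a a = complex_of_real ((cmod (M True a))\<^sup>2 + (cmod (M False a))\<^sup>2)"
  unfolding mul2_def adj2_def of_real_add complex_norm_square by (simp add: mult.commute)

lemma opnorm_prodop:
  assumes g: "\<And>k. k \<in> {1..n} \<Longrightarrow> good2 (F k)"
  shows "opnorm n (prodop n F) \<le> 1"
proof -
  let ?G = "\<lambda>k. mul2 (adj2 (F k)) (F k)"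
  let ?r = "\<lambda>k a. (cmod (F k True a))\<^sup>2 + (cmod (F k False a))\<^sup>2"
  have e: "mmult n (madj (prodop n F)) (prodop n F) = prodop n ?G"
    unfolding madj_prodop mmult_prodop ..
  show ?thesis
  proof (rule opnorm_diag_le1[OF e[THEN eq_eqv_trans', OF eqv_refl], where d="\<lambda>x. \<Prod>k\<in>{1..n}. ?r k (k \<in> x)"])
    fix x y assume x: "x \<in> PP n" and y: "y \<in> PP n"
    show "prodop n ?G x y = (if x = y then complex_of_real (\<Prod>k\<in>{1..n}. ?r k (k \<in> x)) else 0)"
    proof (cases "x = y")
      case True
      then show ?thesis by (simp add: prodop_def mul2_adj_diag of_real_prod del: of_real_add of_real_power)
    next
      case False
      have "\<exists>k. k \<in> {1..n} \<and> (k \<in> x) \<noteq> (k \<in> y)"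
      proof (rule ccontr)
        assume "\<not> ?thesis"
        then have "x = y" using x y by (intro set_eqI) blast
        then show False using False by simp
      qed
      then obtain k where k: "k \<in> {1..n}" "(k \<in> x) \<noteq> (k \<in> y)" by blast
      have "?G k (k \<in> x) (k \<in> y) = 0" using g[OF k(1)] k(2) unfolding good2_def
        by (cases "k \<in> x") auto
      then have "prodop n ?G x y = 0" unfolding prodop_def using k(1) by (intro prod_zero) auto
      then show ?thesis using False by simp
    qed
  next
    fix x assume x: "x \<in> PP n"
    have "?r k b \<le> 1" if "k \<in> {1..n}" for k b using g[OF that] unfolding good2_def by (cases b) auto
    then show "0 \<le> (\<Prod>k\<in>{1..n}. ?r k (k \<in> x)) \<and> (\<Prod>k\<in>{1..n}. ?r k (k \<in> x)) \<le> 1"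
      by (auto intro!: prod_nonneg prod_le_1)
  qed
qed

lemma good2_id: "good2 id2" unfolding good2_def mul2_def adj2_def id2_def by simp
lemma good2_z: "good2 pauli_z" unfolding good2_def mul2_def adj2_def pauli_z_def by simp
lemma good2_lower: "good2 lower" unfolding good2_def mul2_def adj2_def lower_def pauli_x_def pauli_y_def by simp
lemma good2_lower_adj: "good2 (adj2 lower)" unfolding good2_def mul2_def adj2_def lower_def pauli_x_def pauli_y_def by simp
lemma good2_e11: "good2 e11" unfolding good2_def mul2_def adj2_def e11_def by simp

lemma opnorm_site: "k \<in> {1..n} \<Longrightarrow> good2 M \<Longrightarrow> opnorm n (site k M) \<le> 1"
  using opnorm_prodop[of n "(\<lambda>k. id2)(k := M)"] opnorm_cong[OF site_prodop[of k n M]] good2_id by auto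

definition cf :: "nat \<Rightarrow> nat \<Rightarrow> bool \<Rightarrow> bool \<Rightarrow> complex" where
  "cf j = (\<lambda>k. if k \<in> {1..<j} then pauli_z else if k = j then lower else id2)"

lemma site_mult_foldr_prodop:
  assumes "1 \<le> j" "j \<le> n" "eqv n B (prodop n G)"
  shows "eqv n (foldr (\<lambda>k M. mmult n (site k pauli_z) M) [1..<j] B)
                (prodop n (\<lambda>k. if k \<in> {1..<j} then mul2 pauli_z (G k) else G k))"
proof -
  have "set [1..<j] \<subseteq> {1..n}" using assms by auto
  from foldr_prodop[OF distinct_upt this assms(3), of pauli_z] show ?thesis by simp
qed

lemma jw_prodop:
  assumes "1 \<le> j" "j \<le> n"
  shows "eqv n (jw n j) (prodop n (cf j))"
proof -
  have "eqv n (jw n j) (prodop n (\<lambda>k. if k \<in> {1..<j} then mul2 pauli_z (((\<lambda>k. id2)(j := lower)) k) else ((\<lambda>k. id2)(j := lower)) k))"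
    unfolding jw_def using assms by (intro site_mult_foldr_prodop site_prodop) auto
  also have "(\<lambda>k. if k \<in> {1..<j} then mul2 pauli_z (((\<lambda>k. id2)(j := lower)) k) else ((\<lambda>k. id2)(j := lower)) k) = cf j"
    unfolding cf_def by (auto intro!: ext)
  finally show ?thesis .
qed

lemma good2_cf: "good2 (cf j k)" unfolding cf_def using good2_z good2_lower good2_id by auto
lemma good2_cf_adj: "good2 (adj2 (cf j k))" unfolding cf_def using good2_z good2_lower_adj good2_id by auto

lemma opnorm_jw: "1 \<le> j \<Longrightarrow> j \<le> n \<Longrightarrow> opnorm n (jw n j) \<le> 1"
  using opnorm_cong[OF jw_prodop, of j n] opnorm_prodop[of n "cf j"] good2_cf by auto

lemma opnorm_jw_adj: "1 \<le> j \<Longrightarrow> j \<le> n \<Longrightarrow> opnorm n (madj (jw n j)) \<le> 1"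
  using opnorm_cong[OF madj_cong[OF jw_prodop], of j n] opnorm_prodop[of n "\<lambda>k. adj2 (cf j k)"] good2_cf_adj
  by (auto simp: madj_prodop)

lemma lower_via_jw:
  assumes "1 \<le> j" "j \<le> n"
  shows "eqv n (site j lower) (foldr (\<lambda>k M. mmult n (site k pauli_z) M) [1..<j] (jw n j))"
proof -
  have "eqv n (foldr (\<lambda>k M. mmult n (site k pauli_z) M) [1..<j] (jw n j))
      (prodop n (\<lambda>k. if k \<in> {1..<j} then mul2 pauli_z (cf j k) else cf j k))"
    using assms by (intro site_mult_foldr_prodop jw_prodop)
  also have "(\<lambda>k. if k \<in> {1..<j} then mul2 pauli_z (cf j k) else cf j k) = (\<lambda>k. id2)(j := lower)"
    unfolding cf_def by (auto intro!: ext)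
  finally have c: "eqv n (foldr (\<lambda>k M. mmult n (site k pauli_z) M) [1..<j] (jw n j)) (prodop n ((\<lambda>k. id2)(j := lower)))" .
  have s: "eqv n (site j lower) (prodop n ((\<lambda>k. id2)(j := lower)))" using assms by (intro site_prodop) auto
  show ?thesis by (rule eqv_trans[OF s eqv_sym[OF c]])
qed

lemma jw_jw_adj:
  assumes "1 \<le> k" "k \<le> n"
  shows "eqv n (mmult n (jw n k) (madj (jw n k))) (site k e11)"
proof -
  have "eqv n (mmult n (jw n k) (madj (jw n k))) (mmult n (prodop n (cf k)) (madj (prodop n (cf k))))"
    using assms by (intro mmult_cong madj_cong jw_prodop)
  also have "mmult n (prodop n (cf k)) (madj (prodop n (cf k))) = prodop n (\<lambda>i. mul2 (cf k i) (adj2 (cf k i)))"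
    unfolding madj_prodop mmult_prodop ..
  also have "(\<lambda>i. mul2 (cf k i) (adj2 (cf k i))) = (\<lambda>i. id2)(k := e11)"
    unfolding cf_def by (auto simp: mul2_lower_adj intro!: ext)
  finally have c: "eqv n (mmult n (jw n k) (madj (jw n k))) (prodop n ((\<lambda>i. id2)(k := e11)))" .
  have s: "eqv n (site k e11) (prodop n ((\<lambda>i. id2)(k := e11)))" using assms by (intro site_prodop) auto
  show ?thesis by (rule eqv_trans[OF c eqv_sym[OF s]])
qed

lemma lower_lower_adj:
  assumes "1 \<le> k" "k \<le> n"
  shows "eqv n (mmult n (site k lower) (madj (site k lower))) (site k e11)"
proof -
  have "eqv n (mmult n (site k lower) (madj (site k lower)))
     (mmult n (prodop n ((\<lambda>i. id2)(k := lower))) (madj (prodop n ((\<lambda>i. id2)(k := lower)))))"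
    using assms by (intro mmult_cong madj_cong site_prodop) auto
  also have "\<dots> = prodop n (\<lambda>i. mul2 (((\<lambda>i. id2)(k := lower)) i) (adj2 (((\<lambda>i. id2)(k := lower)) i)))"
    unfolding madj_prodop mmult_prodop ..
  also have "(\<lambda>i. mul2 (((\<lambda>i. id2)(k := lower)) i) (adj2 (((\<lambda>i. id2)(k := lower)) i))) = (\<lambda>i. id2)(k := e11)"
    by (auto simp: mul2_lower_adj intro!: ext)
  finally have c: "eqv n (mmult n (site k lower) (madj (site k lower))) (prodop n ((\<lambda>i. id2)(k := e11)))" .
  have s: "eqv n (site k e11) (prodop n ((\<lambda>i. id2)(k := e11)))" using assms by (intro site_prodop) auto
  show ?thesis by (rule eqv_trans[OF c eqv_sym[OF s]])
qed

lemma z_via_e11: "eqv n (site k pauli_z) (msub (mid n) (mscale 2 (site k e11)))"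
  unfolding eqv_def site_def msub_def mscale_def mid_def pauli_z_def e11_def by auto

lemma site_loc: "site j M \<in> loc_alg n {j}"
  unfolding loc_alg_def site_def
  by (rule CollectI, rule exI[where x="\<lambda>a b. M (j \<in> a) (j \<in> b)"]) auto

lemma loc_decomp:
  assumes A: "A \<in> loc_alg n {j}" and j: "j \<in> {1..n}"
  defines "\<alpha> \<equiv> \<lambda>a b. A (if a then {j} else {}) (if b then {j} else {})"
  shows "eqv n A (madd (madd (mscale (\<alpha> True False) (site j lower)) (mscale (\<alpha> False True) (madj (site j lower))))
                       (madd (mscale (\<alpha> True True) (site j e11)) (mscale (\<alpha> False False) (msub (mid n) (site j e11)))))"
  unfolding eqv_def
proof (intro ballI)
  fix x y assume x: "x \<in> PP n" and y: "y \<in> PP n"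
  from A obtain f where f: "\<And>x y. x \<in> PP n \<Longrightarrow> y \<in> PP n \<Longrightarrow> A x y = (if x - {j} = y - {j} then f (x \<inter> {j}) (y \<inter> {j}) else 0)"
    unfolding loc_alg_def by blast
  have jj: "(if b then {j} else {}) \<in> PP n" for b using j by auto
  have al: "\<alpha> a b = f (if a then {j} else {}) (if b then {j} else {})" for a b
    using f[OF jj[of a] jj[of b]] unfolding \<alpha>_def by (cases a; cases b) auto
  have xi: "x \<inter> {j} = (if j \<in> x then {j} else {})" "y \<inter> {j} = (if j \<in> y then {j} else {})" by auto
  have mid: "mid n x y = (if x - {j} = y - {j} \<and> (j \<in> x \<longleftrightarrow> j \<in> y) then 1 else 0)"
    unfolding mid_def by auto
  show "A x y = madd (madd (mscale (\<alpha> True False) (site j lower)) (mscale (\<alpha> False True) (madj (site j lower))))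
                       (madd (mscale (\<alpha> True True) (site j e11)) (mscale (\<alpha> False False) (msub (mid n) (site j e11)))) x y"
    unfolding f[OF x y] madd_def mscale_def msub_def mid madj_site al xi
    unfolding site_def lower_def adj2_def e11_def pauli_x_def pauli_y_def
    by (cases "j \<in> x"; cases "j \<in> y") auto
qed


lemma comm_tau_cong: "eqv n X Y \<Longrightarrow> opnorm n (comm n (tau lam \<omega> n t X) B) = opnorm n (comm n (tau lam \<omega> n t Y) B)"
  by (intro opnorm_cong comm_cong tau_cong eqv_refl)

lemma foldr_comm_bound:
  assumes ks: "set ks \<subseteq> {1..n}"
    and zb: "\<And>k. k \<in> set ks \<Longrightarrow> opnorm n (comm n (tau lam \<omega> n t (site k pauli_z)) B) \<le> \<beta> k"
    and m1: "opnorm n M0 \<le> 1" and m2: "opnorm n (madj M0) \<le> 1"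
    and b1: "opnorm n (comm n (tau lam \<omega> n t M0) B) \<le> \<beta>0"
    and b2: "opnorm n (comm n (tau lam \<omega> n t (madj M0)) B) \<le> \<beta>0'"
  shows "opnorm n (foldr (\<lambda>k M. mmult n (site k pauli_z) M) ks M0) \<le> 1 \<and>
         opnorm n (madj (foldr (\<lambda>k M. mmult n (site k pauli_z) M) ks M0)) \<le> 1 \<and>
         opnorm n (comm n (tau lam \<omega> n t (foldr (\<lambda>k M. mmult n (site k pauli_z) M) ks M0)) B)
            \<le> sum_list (map \<beta> ks) + \<beta>0 \<and>
         opnorm n (comm n (tau lam \<omega> n t (madj (foldr (\<lambda>k M. mmult n (site k pauli_z) M) ks M0))) B)
            \<le> sum_list (map \<beta> ks) + \<beta>0'"
  using ks zb
proof (induction ks)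
  case Nil then show ?case using m1 m2 b1 b2 by simp
next
  case (Cons k ks)
  let ?P = "foldr (\<lambda>k M. mmult n (site k pauli_z) M) ks M0"
  let ?Z = "site k pauli_z"
  from Cons have IH: "opnorm n ?P \<le> 1" "opnorm n (madj ?P) \<le> 1"
    "opnorm n (comm n (tau lam \<omega> n t ?P) B) \<le> sum_list (map \<beta> ks) + \<beta>0"
    "opnorm n (comm n (tau lam \<omega> n t (madj ?P)) B) \<le> sum_list (map \<beta> ks) + \<beta>0'" by auto
  have k: "k \<in> {1..n}" using Cons.prems by auto
  have z1: "opnorm n ?Z \<le> 1" by (rule opnorm_site[OF k good2_z])
  have zb': "opnorm n (comm n (tau lam \<omega> n t ?Z) B) \<le> \<beta> k" using Cons.prems by auto
  have ad: "madj (mmult n ?Z ?P) = mmult n (madj ?P) ?Z" by (simp add: madj_mmult madj_site)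
  have n1: "opnorm n (mmult n ?Z ?P) \<le> 1"
    using order_trans[OF opnorm_mmult mult_le_one[OF z1 opnorm_nonneg IH(1)]] .
  have n2: "opnorm n (madj (mmult n ?Z ?P)) \<le> 1" unfolding ad
    using order_trans[OF opnorm_mmult mult_le_one[OF IH(2) opnorm_nonneg z1]] .
  have c1: "opnorm n (comm n (tau lam \<omega> n t (mmult n ?Z ?P)) B) \<le> \<beta> k + (sum_list (map \<beta> ks) + \<beta>0)"
    using order_trans[OF comm_tau_mult[OF z1 IH(1)] add_mono[OF zb' IH(3)]] .
  have c2: "opnorm n (comm n (tau lam \<omega> n t (madj (mmult n ?Z ?P))) B) \<le> \<beta> k + (sum_list (map \<beta> ks) + \<beta>0')"
    unfolding ad using order_trans[OF comm_tau_mult[OF IH(2) z1] add_mono[OF IH(4) zb']] by simp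
  show ?case using n1 n2 c1 c2 by (simp add: add.assoc)
qed

lemma geo_aux:
  fixes q :: real assumes q: "0 \<le> q" "q < 1"
  shows "(\<Sum>k\<in>{1..<j}. q ^ (j - k)) \<le> q / (1 - q)"
proof (induction j)
  case 0 then show ?case using q by simp
next
  case (Suc j)
  show ?case
  proof (cases "j = 0")
    case True then show ?thesis using q by simp
  next
    case False
    then have "{1..<Suc j} = insert j {1..<j}" by auto
    then have "(\<Sum>k\<in>{1..<Suc j}. q ^ (Suc j - k)) = q + (\<Sum>k\<in>{1..<j}. q ^ (Suc j - k))" by simp
    also have "(\<Sum>k\<in>{1..<j}. q ^ (Suc j - k)) = q * (\<Sum>k\<in>{1..<j}. q ^ (j - k))"
      by (simp add: sum_distrib_left Suc_diff_le flip: power_Suc)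
    also have "q + q * (\<Sum>k\<in>{1..<j}. q ^ (j - k)) \<le> q + q * (q / (1 - q))"
      using Suc.IH q by (intro add_left_mono mult_left_mono) auto
    also have "\<dots> = q / (1 - q)" using q by (simp add: field_simps)
    finally show ?thesis .
  qed
qed

lemma geo_sum:
  fixes \<mu> w :: real
  assumes mu: "0 < \<mu>" and jj: "j \<le> j'"
  shows "(\<Sum>k\<in>{1..<j}. exp (- \<mu> * (real (j' - k) - w))) \<le> exp (- \<mu> * (real (j' - j) - w)) * (exp (- \<mu>) / (1 - exp (- \<mu>)))"
proof -
  have e: "exp (- \<mu> * (real (j' - k) - w)) = exp (- \<mu> * (real (j' - j) - w)) * exp (- \<mu>) ^ (j - k)" if "k \<in> {1..<j}" for k
  proof -
    have "real (j' - k) = real (j' - j) + real (j - k)" using that jj by auto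
    then have "- \<mu> * (real (j' - k) - w) = - \<mu> * (real (j' - j) - w) + real (j - k) * (- \<mu>)" by (simp add: algebra_simps)
    then have "exp (- \<mu> * (real (j' - k) - w)) = exp (- \<mu> * (real (j' - j) - w)) * exp (real (j - k) * (- \<mu>))"
      by (simp only: exp_add)
    then show ?thesis by (simp only: exp_of_nat_mult)
  qed
  have "(\<Sum>k\<in>{1..<j}. exp (- \<mu> * (real (j' - k) - w))) = exp (- \<mu> * (real (j' - j) - w)) * (\<Sum>k\<in>{1..<j}. exp (- \<mu>) ^ (j - k))"
    unfolding sum_distrib_left by (rule sum.cong[OF refl e])
  also have "\<dots> \<le> exp (- \<mu> * (real (j' - j) - w)) * (exp (- \<mu>) / (1 - exp (- \<mu>)))"
    using mu by (intro mult_left_mono geo_aux) auto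
  finally show ?thesis .
qed


lemma ct_madd: "opnorm n (comm n (tau lam \<omega> n t (madd X Y)) B) \<le> opnorm n (comm n (tau lam \<omega> n t X) B) + opnorm n (comm n (tau lam \<omega> n t Y) B)"
  unfolding tau_madd comm_madd by (rule opnorm_madd)
lemma ct_msub: "opnorm n (comm n (tau lam \<omega> n t (msub X Y)) B) \<le> opnorm n (comm n (tau lam \<omega> n t X) B) + opnorm n (comm n (tau lam \<omega> n t Y) B)"
  unfolding tau_msub comm_msub by (rule opnorm_msub)
lemma ct_mscale: "opnorm n (comm n (tau lam \<omega> n t (mscale c X)) B) \<le> cmod c * opnorm n (comm n (tau lam \<omega> n t X) B)"
  unfolding tau_mscale comm_mscale by (rule opnorm_mscale)
lemma ct_mid: "opnorm n (comm n (tau lam \<omega> n t (mid n)) B) = 0"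
  using comm_tau_cong[OF tau_mid] comm_mid
  by (metis opnorm_cong comm_cong tau_mid eqv_refl)

lemma chain_bound:
  assumes j: "1 \<le> j" "j \<le> n" and mu: "0 < \<mu>" and jj: "j \<le> j'" and K: "0 \<le> K"
    and zb: "\<And>k. k \<in> {1..<j} \<Longrightarrow> opnorm n (comm n (tau lam \<omega> n t (site k pauli_z)) B) \<le> K * exp (- \<mu> * (real (j' - k) - w))"
    and m1: "opnorm n M0 \<le> 1" and m2: "opnorm n (madj M0) \<le> 1"
    and b1: "opnorm n (comm n (tau lam \<omega> n t M0) B) \<le> K * exp (- \<mu> * (real (j' - j) - w))"
    and b2: "opnorm n (comm n (tau lam \<omega> n t (madj M0)) B) \<le> K * exp (- \<mu> * (real (j' - j) - w))"
  shows "opnorm n (comm n (tau lam \<omega> n t (foldr (\<lambda>k M. mmult n (site k pauli_z) M) [1..<j] M0)) B)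
            \<le> K * (exp (- \<mu>) / (1 - exp (- \<mu>)) + 1) * exp (- \<mu> * (real (j' - j) - w))"
    and "opnorm n (comm n (tau lam \<omega> n t (madj (foldr (\<lambda>k M. mmult n (site k pauli_z) M) [1..<j] M0))) B)
            \<le> K * (exp (- \<mu>) / (1 - exp (- \<mu>)) + 1) * exp (- \<mu> * (real (j' - j) - w))"
proof -
  let ?e = "\<lambda>k. exp (- \<mu> * (real (j' - k) - w))"
  let ?\<beta> = "\<lambda>k. K * ?e k"
  have fb: "opnorm n (comm n (tau lam \<omega> n t (foldr (\<lambda>k M. mmult n (site k pauli_z) M) [1..<j] M0)) B) \<le> sum_list (map ?\<beta> [1..<j]) + ?\<beta> j \<and>
      opnorm n (comm n (tau lam \<omega> n t (madj (foldr (\<lambda>k M. mmult n (site k pauli_z) M) [1..<j] M0))) B) \<le> sum_list (map ?\<beta> [1..<j]) + ?\<beta> j"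
  proof -
    have s: "set [1..<j] \<subseteq> {1..n}" using j by auto
    have z: "\<And>k. k \<in> set [1..<j] \<Longrightarrow> opnorm n (comm n (tau lam \<omega> n t (site k pauli_z)) B) \<le> ?\<beta> k"
      using zb by simp
    show ?thesis using foldr_comm_bound[of "[1..<j]" n lam \<omega> t B ?\<beta> M0 "?\<beta> j" "?\<beta> j", OF s z m1 m2 b1 b2] by blast
  qed
  have "sum_list (map ?\<beta> [1..<j]) = K * (\<Sum>k\<in>{1..<j}. ?e k)"
    by (simp add: sum_set_upt_conv_sum_list_nat[symmetric] sum_distrib_left)
  also have "\<dots> \<le> K * (?e j * (exp (- \<mu>) / (1 - exp (- \<mu>))))"
    by (intro mult_left_mono geo_sum mu jj K)
  finally have "sum_list (map ?\<beta> [1..<j]) + ?\<beta> j \<le> K * (exp (- \<mu>) / (1 - exp (- \<mu>)) + 1) * ?e j"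
    by (simp add: algebra_simps)
  then show "opnorm n (comm n (tau lam \<omega> n t (foldr (\<lambda>k M. mmult n (site k pauli_z) M) [1..<j] M0)) B)
            \<le> K * (exp (- \<mu>) / (1 - exp (- \<mu>)) + 1) * ?e j"
    and "opnorm n (comm n (tau lam \<omega> n t (madj (foldr (\<lambda>k M. mmult n (site k pauli_z) M) [1..<j] M0))) B)
            \<le> K * (exp (- \<mu>) / (1 - exp (- \<mu>)) + 1) * ?e j"
    using fb by linarith+
qed

lemma scal: "(X::real) \<le> C * a * b * e \<Longrightarrow> a \<le> 1 \<Longrightarrow> 0 \<le> C \<Longrightarrow> 0 \<le> b \<Longrightarrow> 0 \<le> e \<Longrightarrow> X \<le> C * b * e"
proof -
  assume X: "X \<le> C * a * b * e" and a: "a \<le> 1" and "0 \<le> C" "0 \<le> b" "0 \<le> e"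
  then have p: "0 \<le> C * b * e" by simp
  have "C * a * b * e = a * (C * b * e)" by (simp add: mult_ac)
  also have "\<dots> \<le> C * b * e" using a p by (cases "0 \<le> a") (auto intro: mult_left_le_one_le order_trans[OF _ p] simp: mult_nonpos_nonneg)
  finally show ?thesis using X by linarith
qed

lemma exp_neg_lt1: "0 < (\<mu>::real) \<Longrightarrow> exp (- \<mu>) < 1" by simp

lemma LR_imp_fermi:
  assumes "LR lam \<omega> \<alpha>" shows "LR_fermi lam \<omega> \<alpha>"
proof -
  from assms obtain C0 \<mu> v where C0: "C0 > 0" "\<mu> > 0" "v \<ge> 0" and
    H: "\<forall>n j j' t A B. 1 \<le> j \<and> j < j' \<and> j' \<le> n \<and> t > 0 \<and>
        A \<in> loc_alg n {j} \<and> B \<in> loc_alg n {j'..n} \<longrightarrow>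
        opnorm n (comm n (tau lam \<omega> n t A) B)
          \<le> C0 * opnorm n A * opnorm n B * exp (- \<mu> * (real (j' - j) - v * t powr \<alpha>))"
    unfolding LR_def by blast
  define G where "G = exp (- \<mu>) / (1 - exp (- \<mu>)) + 1"
  have G: "G > 0" unfolding G_def using exp_neg_lt1[OF C0(2)] by (simp add: add_pos_nonneg)
  show ?thesis unfolding LR_fermi_def
  proof (rule exI[of _ "2 * C0 * G"], rule exI[of _ \<mu>], rule exI[of _ v], intro conjI allI impI)
    show "0 < 2 * C0 * G" using C0 G by simp
    show "0 < \<mu>" using C0 by auto
    show "0 \<le> v" using C0 by auto
    fix n j j' :: nat and t :: real and B :: op assume h: "1 \<le> j \<and> j < j' \<and> j' \<le> n \<and> t > 0 \<and> B \<in> loc_alg n {j'..n}"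
    let ?w = "v * t powr \<alpha>"
    let ?e = "\<lambda>k. exp (- \<mu> * (real (j' - k) - ?w))"
    have K: "0 \<le> C0 * opnorm n B" using C0 by simp
    have zb: "opnorm n (comm n (tau lam \<omega> n t (site k pauli_z)) B) \<le> C0 * opnorm n B * ?e k" if k: "k \<in> {1..<j}" for k
    proof (rule scal)
      show "opnorm n (comm n (tau lam \<omega> n t (site k pauli_z)) B) \<le> C0 * opnorm n (site k pauli_z) * opnorm n B * ?e k"
        using H[rule_format, of k j' n t "site k pauli_z" B] h k site_loc by auto
      show "opnorm n (site k pauli_z) \<le> 1" using k h by (intro opnorm_site good2_z) auto
    qed (use C0 in auto)
    have jn: "j \<in> {1..n}" using h by auto
    have m1: "opnorm n (site j lower) \<le> 1" by (rule opnorm_site[OF jn good2_lower])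
    have m2: "opnorm n (madj (site j lower)) \<le> 1" unfolding madj_site by (rule opnorm_site[OF jn good2_lower_adj])
    have b1: "opnorm n (comm n (tau lam \<omega> n t (site j lower)) B) \<le> C0 * opnorm n B * ?e j"
    proof (rule scal)
      show "opnorm n (comm n (tau lam \<omega> n t (site j lower)) B) \<le> C0 * opnorm n (site j lower) * opnorm n B * ?e j"
        using H[rule_format, of j j' n t "site j lower" B] h site_loc by auto
    qed (use C0 m1 in auto)
    have b2: "opnorm n (comm n (tau lam \<omega> n t (madj (site j lower))) B) \<le> C0 * opnorm n B * ?e j"
    proof (rule scal)
      show "opnorm n (comm n (tau lam \<omega> n t (madj (site j lower))) B) \<le> C0 * opnorm n (madj (site j lower)) * opnorm n B * ?e j"
        using H[rule_format, of j j' n t "madj (site j lower)" B] h site_loc unfolding madj_site by auto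
    qed (use C0 m2 in auto)
    have jj: "j \<le> j'" using h by simp
    note cb = chain_bound[OF _ _ C0(2) jj K zb m1 m2 b1 b2]
    have "opnorm n (comm n (tau lam \<omega> n t (jw n j)) B) + opnorm n (comm n (tau lam \<omega> n t (madj (jw n j))) B)
       \<le> C0 * opnorm n B * G * ?e j + C0 * opnorm n B * G * ?e j"
      unfolding jw_def G_def using cb h by (intro add_mono) auto
    then show "opnorm n (comm n (tau lam \<omega> n t (jw n j)) B) + opnorm n (comm n (tau lam \<omega> n t (madj (jw n j))) B)
       \<le> 2 * C0 * G * opnorm n B * ?e j" by (simp add: algebra_simps)
  qed
qed

lemma fermi_imp_LR:
  assumes "LR_fermi lam \<omega> \<alpha>" shows "LR lam \<omega> \<alpha>"
proof -
  from assms obtain C1 \<mu> v where C1: "C1 > 0" "\<mu> > 0" "v \<ge> 0" and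
    H: "\<forall>n j j' t B. 1 \<le> j \<and> j < j' \<and> j' \<le> n \<and> t > 0 \<and> B \<in> loc_alg n {j'..n} \<longrightarrow>
        opnorm n (comm n (tau lam \<omega> n t (jw n j)) B)
          + opnorm n (comm n (tau lam \<omega> n t (madj (jw n j))) B)
          \<le> C1 * opnorm n B * exp (- \<mu> * (real (j' - j) - v * t powr \<alpha>))"
    unfolding LR_fermi_def by blast
  define G where "G = exp (- \<mu>) / (1 - exp (- \<mu>)) + 1"
  have G: "G > 0" unfolding G_def using exp_neg_lt1[OF C1(2)] by (simp add: add_pos_nonneg)
  show ?thesis unfolding LR_def
  proof (rule exI[of _ "12 * C1 * G"], rule exI[of _ \<mu>], rule exI[of _ v], intro conjI allI impI)
    show "0 < 12 * C1 * G" using C1 G by simp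
    show "0 < \<mu>" using C1 by auto
    show "0 \<le> v" using C1 by auto
    fix n j j' :: nat and t :: real and A B :: op
    assume h: "1 \<le> j \<and> j < j' \<and> j' \<le> n \<and> t > 0 \<and> A \<in> loc_alg n {j} \<and> B \<in> loc_alg n {j'..n}"
    let ?w = "v * t powr \<alpha>"
    let ?e = "\<lambda>k. exp (- \<mu> * (real (j' - k) - ?w))"
    let ?T = "tau lam \<omega> n t"
    define K where "K = 2 * C1 * opnorm n B"
    have K: "0 \<le> K" unfolding K_def using C1 by simp
    have hc: "opnorm n (comm n (?T (jw n k)) B) + opnorm n (comm n (?T (madj (jw n k))) B) \<le> C1 * opnorm n B * ?e k"
      if k: "1 \<le> k" "k \<le> j" for k
      using H[rule_format, of k j' n t B] h k by auto
    have zb: "opnorm n (comm n (?T (site k pauli_z)) B) \<le> K * ?e k" if k: "k \<in> {1..<j}" for k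
    proof -
      have k1: "1 \<le> k" "k \<le> n" using k h by auto
      let ?X = "mmult n (jw n k) (madj (jw n k))"
      have "eqv n (site k pauli_z) (msub (mid n) (mscale 2 ?X))"
        using z_via_e11[of n k] msub_cong[OF eqv_refl mscale_cong[OF eqv_sym[OF jw_jw_adj[OF k1]]]]
        by (rule eqv_trans)
      then have "opnorm n (comm n (?T (site k pauli_z)) B) = opnorm n (comm n (?T (msub (mid n) (mscale 2 ?X))) B)"
        by (rule comm_tau_cong)
      also have "\<dots> \<le> opnorm n (comm n (?T (mid n)) B) + opnorm n (comm n (?T (mscale 2 ?X)) B)"
        by (rule ct_msub)
      also have "\<dots> \<le> 0 + 2 * opnorm n (comm n (?T ?X) B)"
        using ct_mscale[where lam=lam and \<omega>=\<omega> and n=n and t=t and c=2 and X="?X" and B=B] ct_mid[where lam=lam and \<omega>=\<omega> and n=n and t=t and B=B] by simp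
      also have "\<dots> \<le> 2 * (opnorm n (comm n (?T (jw n k)) B) + opnorm n (comm n (?T (madj (jw n k))) B))"
        using comm_tau_mult[OF opnorm_jw[OF k1] opnorm_jw_adj[OF k1], where lam=lam and \<omega>=\<omega> and t=t and B=B] by simp
      also have "\<dots> \<le> 2 * (C1 * opnorm n B * ?e k)" using hc[of k] k by simp
      finally show ?thesis unfolding K_def by (simp add: mult_ac)
    qed
    have j1: "1 \<le> j" "j \<le> n" using h by auto
    have jn: "j \<in> {1..n}" using h by auto
    have jj: "j \<le> j'" using h by simp
    have pe: "0 \<le> C1 * opnorm n B * ?e j" using C1 by simp
    have hcj: "opnorm n (comm n (?T (jw n j)) B) + opnorm n (comm n (?T (madj (jw n j))) B) \<le> C1 * opnorm n B * ?e j"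
      using hc[of j] j1 by simp
    have KK: "C1 * opnorm n B * ?e j \<le> K * ?e j" unfolding K_def using pe by simp
    have b1: "opnorm n (comm n (?T (jw n j)) B) \<le> K * ?e j"
      using hcj KK opnorm_nonneg[of n "comm n (?T (madj (jw n j))) B"] by linarith
    have b2: "opnorm n (comm n (?T (madj (jw n j))) B) \<le> K * ?e j"
      using hcj KK opnorm_nonneg[of n "comm n (?T (jw n j)) B"] by linarith
    note cb = chain_bound[OF j1 C1(2) jj K zb opnorm_jw[OF j1] opnorm_jw_adj[OF j1] b1 b2]
    define L where "L = K * G * ?e j"
    have L: "0 \<le> L" unfolding L_def using K G by simp
    have La: "opnorm n (comm n (?T (site j lower)) B) \<le> L"
      unfolding L_def G_def comm_tau_cong[OF lower_via_jw[OF j1]] using cb(1) by simp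
    have Lb: "opnorm n (comm n (?T (madj (site j lower))) B) \<le> L"
      unfolding L_def G_def comm_tau_cong[OF madj_cong[OF lower_via_jw[OF j1]]] using cb(2) by simp
    have ma: "opnorm n (site j lower) \<le> 1" by (rule opnorm_site[OF jn good2_lower])
    have mb: "opnorm n (madj (site j lower)) \<le> 1" unfolding madj_site by (rule opnorm_site[OF jn good2_lower_adj])
    have Lc: "opnorm n (comm n (?T (site j e11)) B) \<le> 2 * L"
    proof -
      have "opnorm n (comm n (?T (site j e11)) B) = opnorm n (comm n (?T (mmult n (site j lower) (madj (site j lower)))) B)"
        by (rule comm_tau_cong[OF eqv_sym[OF lower_lower_adj[OF j1]]])
      also have "\<dots> \<le> L + L" using comm_tau_mult[OF ma mb, where lam=lam and \<omega>=\<omega> and t=t and B=B] La Lb by simp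
      finally show ?thesis by simp
    qed
    have Ld: "opnorm n (comm n (?T (msub (mid n) (site j e11))) B) \<le> 2 * L"
      using ct_msub[where lam=lam and \<omega>=\<omega> and n=n and t=t and X="mid n" and Y="site j e11" and B=B] ct_mid[where lam=lam and \<omega>=\<omega> and n=n and t=t and B=B] Lc by simp
    define \<alpha>' where "\<alpha>' = (\<lambda>a b. A (if a then {j} else {}) (if b then {j} else {}))"
    have ab: "cmod (\<alpha>' a b) \<le> opnorm n A" for a b
      unfolding \<alpha>'_def using jn by (intro opnorm_entry) auto
    have "opnorm n (comm n (?T A) B) = opnorm n (comm n (?T
        (madd (madd (mscale (\<alpha>' True False) (site j lower)) (mscale (\<alpha>' False True) (madj (site j lower))))
              (madd (mscale (\<alpha>' True True) (site j e11)) (mscale (\<alpha>' False False) (msub (mid n) (site j e11)))))) B)"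
      unfolding \<alpha>'_def using h jn by (intro comm_tau_cong loc_decomp) auto
    also have "\<dots> \<le> (cmod (\<alpha>' True False) * opnorm n (comm n (?T (site j lower)) B)
                    + cmod (\<alpha>' False True) * opnorm n (comm n (?T (madj (site j lower))) B))
                  + (cmod (\<alpha>' True True) * opnorm n (comm n (?T (site j e11)) B)
                    + cmod (\<alpha>' False False) * opnorm n (comm n (?T (msub (mid n) (site j e11))) B))"
      by (intro order_trans[OF ct_madd] add_mono order_trans[OF ct_mscale] order_refl)
    also have "\<dots> \<le> (opnorm n A * L + opnorm n A * L) + (opnorm n A * (2 * L) + opnorm n A * (2 * L))"
      using L La Lb Lc Ld ab by (intro add_mono mult_mono) auto
    also have "\<dots> = 12 * C1 * G * opnorm n A * opnorm n B * ?e j"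
      unfolding L_def K_def by (simp add: algebra_simps)
    finally show "opnorm n (comm n (?T A) B) \<le> 12 * C1 * G * opnorm n A * opnorm n B * ?e j" .
  qed
qed


theorem lemma3p3:
  fixes lam \<omega> \<alpha> :: real
  assumes "\<alpha> > 0" and "lam > 0"
  shows "LR lam \<omega> \<alpha> \<longleftrightarrow> LR_fermi lam \<omega> \<alpha>"
  using LR_imp_fermi fermi_imp_LR by blast

end
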